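(* Let $\mathcal M$ be an MDP and $(\star)$ a relational reachability property whose comparison operator is $\approx_\epsilon$ for some $\epsilon\ge 0$. For each $c\in\mathsf{Comb}$ and $\mathrm{opt}\in\{\max,\min\}$ let $v^{\mathrm{opt}}_c=\mathrm{opt}_{\sigma\in\Sigma^{\mathcal M_c}}\mathbb E^{\mathcal M_c,\sigma}_{s_c}(\mathit{rew}_c)$ and $v^{\mathrm{opt}}=\sum_{c\in\mathsf{Comb}}v^{\mathrm{opt}}_c$. Then $(\star)$ holds in $\mathcal M$ (over general schedulers) if and only if $q_{m+1}\in[v^{\min}-\epsilon,\,v^{\max}+\epsilon]$.
   Context: An MDP is $\mathcal M=(S,\mathrm{Act},P)$ with $S,\mathrm{Act}$ finite non-empty, each state having a non-empty set of enabled actions $\alpha$ with $\sum_{s'}P(s,\alpha,s')=1$ (and $\sum_{s'}P(s,\alpha,s')=0$ for others). General schedulers map finite paths to distributions over enabled actions of the last state; $\Sigma^{\mathcal M}$ is the set of them; $\Pr^\sigma_s(\Diamond T)$ is the probability of reaching $T$ from $s$ under $\sigma$. $(\star)$ is $\exists \sigma_1,\ldots,\sigma_n\in\Sigma^{\mathcal M}.~ \sum_{i=1}^{m} q_i \Pr^{\sigma_{k_i}}_{s_i}(\Diamond T_i)\ \mathsf{comp}\ q_{m+1}$ with rational $q_i$, states $s_i$, target sets $T_i\subseteq S$, $\{k_1,\dots,k_m\}=\{1,\dots,n\}$; $r\approx_\epsilon r'$ means $|r-r'|\le\epsilon$. $\mathsf{Comb}=\{(s_i,k_i)\mid 1\le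 i\le m\}$, $\mathit{ind}(c)=\{i\mid (s_i,k_i)=c\}$, $\mathcal T_c=\{T_i\mid i\in\mathit{ind}(c)\}$. Goal unfolding $\mathcal M_c$: states $S\times 2^{\mathcal T_c}$, actions $\mathrm{Act}$, $P_c((s,\mathcal T),\alpha,(s',\mathcal T'))=P(s,\alpha,s')$ if $\mathcal T'=\mathcal T\cup\{T\in\mathcal T_c\mid s\in T\}$ and $0$ otherwise; $s_c=(s,\emptyset)$ for $c=(s,k)$. Reward $\mathit{rew}_c=\sum_{T\in\mathcal T_c}q_T\mathit{rew}_T$ with $q_T=\sum_{i\in\mathit{ind}(c),T_i=T}q_i$, $\mathit{rew}_T(s,\mathcal T)=1$ if $s\in T$ and $T\notin\mathcal T$, else $0$. $\mathbb E^{\mathcal M_c,\sigma}_{s_c}(\mathit{rew}_c)$ is the expected total reward along paths from $s_c$ under $\sigma$. *)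

theory Defs
  imports Complex_Main
begin

definition is_mdp :: "'s set \<Rightarrow> 'a set \<Rightarrow> ('s \<Rightarrow> 'a \<Rightarrow> 's \<Rightarrow> real) \<Rightarrow> bool" where
  "is_mdp S Act P \<longleftrightarrow>
     finite S \<and> S \<noteq> {} \<and> finite Act \<and> Act \<noteq> {} \<and>
     (\<forall>s\<in>S. \<forall>\<alpha>\<in>Act. \<forall>s'. P s \<alpha> s' \<ge> 0 \<and> (s' \<notin> S \<longrightarrow> P s \<alpha> s' = 0)) \<and>
     (\<forall>s\<in>S. \<forall>\<alpha>\<in>Act. (\<Sum>s'\<in>S. P s \<alpha> s') = 1 \<or> (\<Sum>s'\<in>S. P s \<alpha> s') = 0) \<and>
     (\<forall>s\<in>S. \<exists>\<alpha>\<in>Act. (\<Sum>s'\<in>S. P s \<alpha> s') = 1)"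

definition enabled :: "'s set \<Rightarrow> 'a set \<Rightarrow> ('s \<Rightarrow> 'a \<Rightarrow> 's \<Rightarrow> real) \<Rightarrow> 's \<Rightarrow> 'a set" where
  "enabled S Act P s = {\<alpha>\<in>Act. (\<Sum>s'\<in>S. P s \<alpha> s') = 1}"

text \<open>A finite path s0 alpha0 s1 ... alpha(k-1) sk is represented by its start state s0
  and the list of steps [(alpha0,s1),...,(alpha(k-1),sk)].\<close>

definition last_state :: "'s \<Rightarrow> ('a \<times> 's) list \<Rightarrow> 's" where
  "last_state s0 h = (if h = [] then s0 else snd (last h))"

type_synonym ('s,'a) sched = "'s \<Rightarrow> ('a \<times> 's) list \<Rightarrow> 'a \<Rightarrow> real"

definition is_sched :: "'s set \<Rightarrow> 'a set \<Rightarrow> ('s \<Rightarrow> 'a \<Rightarrow> 's \<Rightarrow> real) \<Rightarrow> ('s,'a) sched \<Rightarrow> bool" where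
  "is_sched S Act P \<sigma> \<longleftrightarrow>
     (\<forall>s0 h. s0 \<in> S \<and> set h \<subseteq> Act \<times> S \<longrightarrow>
        (\<forall>\<alpha>. \<sigma> s0 h \<alpha> \<ge> 0) \<and>
        (\<forall>\<alpha>. \<alpha> \<notin> enabled S Act P (last_state s0 h) \<longrightarrow> \<sigma> s0 h \<alpha> = 0) \<and>
        (\<Sum>\<alpha>\<in>enabled S Act P (last_state s0 h). \<sigma> s0 h \<alpha>) = 1)"

definition scheds :: "'s set \<Rightarrow> 'a set \<Rightarrow> ('s \<Rightarrow> 'a \<Rightarrow> 's \<Rightarrow> real) \<Rightarrow> ('s,'a) sched set" where
  "scheds S Act P = {\<sigma>. is_sched S Act P \<sigma>}"

text \<open>Probability of the cylinder of a finite path (prefix h already traversed).\<close>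

fun pp :: "('s \<Rightarrow> 'a \<Rightarrow> 's \<Rightarrow> real) \<Rightarrow> ('s,'a) sched \<Rightarrow> 's \<Rightarrow> ('a \<times> 's) list \<Rightarrow> ('a \<times> 's) list \<Rightarrow> real" where
  "pp P \<sigma> s0 h [] = 1"
| "pp P \<sigma> s0 h ((\<alpha>, t) # rest) =
     \<sigma> s0 h \<alpha> * P (last_state s0 h) \<alpha> t * pp P \<sigma> s0 (h @ [(\<alpha>, t)]) rest"

definition path_prob :: "('s \<Rightarrow> 'a \<Rightarrow> 's \<Rightarrow> real) \<Rightarrow> ('s,'a) sched \<Rightarrow> 's \<Rightarrow> ('a \<times> 's) list \<Rightarrow> real" where
  "path_prob P \<sigma> s0 h = pp P \<sigma> s0 [] h"

definition paths_len :: "'s set \<Rightarrow> 'a set \<Rightarrow> nat \<Rightarrow> ('a \<times> 's) list set" where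
  "paths_len S Act n = {h. length h = n \<and> set h \<subseteq> Act \<times> S}"

definition visits :: "'s \<Rightarrow> ('a \<times> 's) list \<Rightarrow> 's set \<Rightarrow> bool" where
  "visits s0 h T \<longleftrightarrow> s0 \<in> T \<or> (\<exists>x\<in>set h. snd x \<in> T)"

definition reach_prob :: "'s set \<Rightarrow> 'a set \<Rightarrow> ('s \<Rightarrow> 'a \<Rightarrow> 's \<Rightarrow> real) \<Rightarrow> ('s,'a) sched \<Rightarrow> 's \<Rightarrow> 's set \<Rightarrow> real" where
  "reach_prob S Act P \<sigma> s T =
     lim (\<lambda>n. \<Sum>h\<in>{h\<in>paths_len S Act n. visits s h T}. path_prob P \<sigma> s h)"

definition exp_total_rew :: "'s set \<Rightarrow> 'a set \<Rightarrow> ('s \<Rightarrow> 'a \<Rightarrow> 's \<Rightarrow> real) \<Rightarrow> ('s,'a) sched \<Rightarrow> 's \<Rightarrow> ('s \<Rightarrow> real) \<Rightarrow> real" where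
  "exp_total_rew S Act P \<sigma> s rew =
     lim (\<lambda>n. \<Sum>h\<in>paths_len S Act n. path_prob P \<sigma> s h * (rew s + (\<Sum>x\<leftarrow>h. rew (snd x))))"

text \<open>The property is given by m, n, coefficients q 1..q (m+1), states s 1..s m,
  targets T 1..T m and scheduler indices k 1..k m.\<close>

definition Comb :: "nat \<Rightarrow> (nat \<Rightarrow> 's) \<Rightarrow> (nat \<Rightarrow> nat) \<Rightarrow> ('s \<times> nat) set" where
  "Comb m s k = (\<lambda>i. (s i, k i)) ` {1..m}"

definition ind :: "nat \<Rightarrow> (nat \<Rightarrow> 's) \<Rightarrow> (nat \<Rightarrow> nat) \<Rightarrow> 's \<times> nat \<Rightarrow> nat set" where
  "ind m s k c = {i\<in>{1..m}. (s i, k i) = c}"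

definition Tc :: "nat \<Rightarrow> (nat \<Rightarrow> 's) \<Rightarrow> (nat \<Rightarrow> 's set) \<Rightarrow> (nat \<Rightarrow> nat) \<Rightarrow> 's \<times> nat \<Rightarrow> 's set set" where
  "Tc m s T k c = T ` ind m s k c"

definition unf_states :: "'s set \<Rightarrow> 's set set \<Rightarrow> ('s \<times> 's set set) set" where
  "unf_states S TT = S \<times> Pow TT"

definition unf_P :: "('s \<Rightarrow> 'a \<Rightarrow> 's \<Rightarrow> real) \<Rightarrow> 's set set
                     \<Rightarrow> ('s \<times> 's set set) \<Rightarrow> 'a \<Rightarrow> ('s \<times> 's set set) \<Rightarrow> real" where
  "unf_P P TT x \<alpha> y =
     (if snd y = snd x \<union> {T\<in>TT. fst x \<in> T} then P (fst x) \<alpha> (fst y) else 0)"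

definition qT :: "nat \<Rightarrow> (nat \<Rightarrow> real) \<Rightarrow> (nat \<Rightarrow> 's) \<Rightarrow> (nat \<Rightarrow> 's set) \<Rightarrow> (nat \<Rightarrow> nat)
                  \<Rightarrow> 's \<times> nat \<Rightarrow> 's set \<Rightarrow> real" where
  "qT m q s T k c U = (\<Sum>i\<in>{i\<in>ind m s k c. T i = U}. q i)"

definition rewT :: "'s set \<Rightarrow> ('s \<times> 's set set) \<Rightarrow> real" where
  "rewT U x = (if fst x \<in> U \<and> U \<notin> snd x then 1 else 0)"

definition rew_c :: "nat \<Rightarrow> (nat \<Rightarrow> real) \<Rightarrow> (nat \<Rightarrow> 's) \<Rightarrow> (nat \<Rightarrow> 's set) \<Rightarrow> (nat \<Rightarrow> nat)
                     \<Rightarrow> 's \<times> nat \<Rightarrow> ('s \<times> 's set set) \<Rightarrow> real" where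
  "rew_c m q s T k c x = (\<Sum>U\<in>Tc m s T k c. qT m q s T k c U * rewT U x)"

definition vmax_c :: "'s set \<Rightarrow> 'a set \<Rightarrow> ('s \<Rightarrow> 'a \<Rightarrow> 's \<Rightarrow> real) \<Rightarrow> nat \<Rightarrow> (nat \<Rightarrow> real)
                      \<Rightarrow> (nat \<Rightarrow> 's) \<Rightarrow> (nat \<Rightarrow> 's set) \<Rightarrow> (nat \<Rightarrow> nat) \<Rightarrow> 's \<times> nat \<Rightarrow> real" where
  "vmax_c S Act P m q s T k c =
     (let TT = Tc m s T k c; Sc = unf_states S TT; Pc = unf_P P TT in
      SUP \<sigma>\<in>scheds Sc Act Pc. exp_total_rew Sc Act Pc \<sigma> (fst c, {}) (rew_c m q s T k c))"

definition vmin_c :: "'s set \<Rightarrow> 'a set \<Rightarrow> ('s \<Rightarrow> 'a \<Rightarrow> 's \<Rightarrow> real) \<Rightarrow> nat \<Rightarrow> (nat \<Rightarrow> real)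
                      \<Rightarrow> (nat \<Rightarrow> 's) \<Rightarrow> (nat \<Rightarrow> 's set) \<Rightarrow> (nat \<Rightarrow> nat) \<Rightarrow> 's \<times> nat \<Rightarrow> real" where
  "vmin_c S Act P m q s T k c =
     (let TT = Tc m s T k c; Sc = unf_states S TT; Pc = unf_P P TT in
      INF \<sigma>\<in>scheds Sc Act Pc. exp_total_rew Sc Act Pc \<sigma> (fst c, {}) (rew_c m q s T k c))"

end

theory Submission
  imports Defs
begin

lemma last_state_append: "last_state s0 (pre @ h) = last_state (last_state s0 pre) h"
  by (simp add: last_state_def)

lemma last_state_Nil[simp]: "last_state s0 [] = s0"
  by (simp add: last_state_def)

lemma last_state_Cons[simp]: "last_state s0 ((a,y) # h) = last_state y h"
  by (simp add: last_state_def)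

lemma pp_shift:
  "pp P \<sigma> s0 (pre @ h0) h =
   pp P (\<lambda>s h'. if s = last_state s0 pre then \<sigma> s0 (pre @ h') else \<sigma> s h') (last_state s0 pre) h0 h"
proof (induction h arbitrary: h0)
  case Nil
  then show ?case by simp
next
  case (Cons a h)
  obtain \<alpha> t where a: "a = (\<alpha>, t)" by (cases a)
  show ?case using Cons[of "h0 @ [(\<alpha>,t)]"] by (simp add: a last_state_append)
qed

lemma pp_cong:
  assumes "\<And>h'. \<sigma>1 s0 h' = \<sigma>2 s0 h'"
  shows "pp P \<sigma>1 s0 h0 h = pp P \<sigma>2 s0 h0 h"
proof (induction h arbitrary: h0)
  case Nil
  then show ?case by simp
next
  case (Cons a h)
  obtain \<alpha> t where a: "a = (\<alpha>, t)" by (cases a)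
  show ?case using Cons assms by (simp add: a)
qed

lemma pp_snoc:
  "pp P \<sigma> s0 pre (h @ [(\<alpha>,t)]) = pp P \<sigma> s0 pre h * \<sigma> s0 (pre @ h) \<alpha> * P (last_state s0 (pre @ h)) \<alpha> t"
proof (induction h arbitrary: pre)
  case Nil
  then show ?case by simp
next
  case (Cons a h)
  obtain \<beta> u where a: "a = (\<beta>, u)" by (cases a)
  show ?case using Cons[of "pre @ [(\<beta>,u)]"] by (simp add: a)
qed

lemma paths_len_0[simp]: "paths_len X Act 0 = {[]}"
  by (auto simp: paths_len_def)

lemma paths_len_Suc:
  "paths_len X Act (Suc n) = (\<lambda>(a,h). a # h) ` ((Act \<times> X) \<times> paths_len X Act n)"
proof (rule set_eqI)
  fix h
  show "h \<in> paths_len X Act (Suc n) \<longleftrightarrow> h \<in> (\<lambda>(a,h). a # h) ` ((Act \<times> X) \<times> paths_len X Act n)"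
    by (cases h) (auto simp: paths_len_def)
qed

lemma finite_paths_len: "finite X \<Longrightarrow> finite Act \<Longrightarrow> finite (paths_len X Act n)"
  by (induction n) (auto simp: paths_len_Suc)

lemma sum_prod_split: "(\<Sum>a\<in>A\<times>B. F a) = (\<Sum>x\<in>A. \<Sum>y\<in>B. F (x,y))"
  by (simp add: sum.cartesian_product)

definition sh :: "('s,'a) sched \<Rightarrow> 's \<Rightarrow> 'a \<Rightarrow> 's \<Rightarrow> ('s,'a) sched" where
  "sh \<sigma> x \<alpha> y = (\<lambda>s h. if s = y then \<sigma> x ((\<alpha>,y)#h) else \<sigma> s h)"

lemma path_prob_Cons:
  "path_prob P \<sigma> x ((\<alpha>,y)#h) = \<sigma> x [] \<alpha> * P x \<alpha> y * path_prob P (sh \<sigma> x \<alpha> y) y h"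
proof -
  have e: "(\<lambda>s h'. if s = y then \<sigma> x ([(\<alpha>, y)] @ h') else \<sigma> s h') = sh \<sigma> x \<alpha> y"
    by (auto simp: sh_def fun_eq_iff)
  have "pp P \<sigma> x ([(\<alpha>,y)] @ []) h = pp P (sh \<sigma> x \<alpha> y) y [] h"
    unfolding pp_shift by (simp add: e)
  then show ?thesis by (simp add: path_prob_def)
qed

definition md :: "('s \<Rightarrow> 'a) \<Rightarrow> ('s,'a) sched" where
  "md d = (\<lambda>s0 h \<alpha>. if \<alpha> = d (last_state s0 h) then 1 else 0)"

locale mdp =
  fixes X :: "'s set" and Act :: "'a set" and P :: "'s \<Rightarrow> 'a \<Rightarrow> 's \<Rightarrow> real"
  assumes mdp: "is_mdp X Act P"
begin

lemma finX: "finite X" and finA: "finite Act" and neX: "X \<noteq> {}"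
  using mdp by (auto simp: is_mdp_def)

lemma P_nonneg: "x \<in> X \<Longrightarrow> \<alpha> \<in> Act \<Longrightarrow> P x \<alpha> y \<ge> 0"
  using mdp by (auto simp: is_mdp_def)

lemma P_out: "x \<in> X \<Longrightarrow> \<alpha> \<in> Act \<Longrightarrow> y \<notin> X \<Longrightarrow> P x \<alpha> y = 0"
  using mdp by (auto simp: is_mdp_def)

lemma P_pos_in: "x \<in> X \<Longrightarrow> \<alpha> \<in> Act \<Longrightarrow> P x \<alpha> y > 0 \<Longrightarrow> y \<in> X"
  using P_out by force

abbreviation en where "en x \<equiv> enabled X Act P x"

lemma en_sub: "en x \<subseteq> Act" by (auto simp: enabled_def)

lemma finite_en: "finite (en x)" using finA en_sub finite_subset by blast

lemma en_ne: "x \<in> X \<Longrightarrow> en x \<noteq> {}"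
  using mdp by (auto simp: is_mdp_def enabled_def)

lemma en_sum: "\<alpha> \<in> en x \<Longrightarrow> (\<Sum>y\<in>X. P x \<alpha> y) = 1"
  by (auto simp: enabled_def)

abbreviation Sch where "Sch \<equiv> scheds X Act P"

lemma last_state_in: "s0 \<in> X \<Longrightarrow> set h \<subseteq> Act \<times> X \<Longrightarrow> last_state s0 h \<in> X"
  by (induction h arbitrary: s0) (auto simp: last_state_def)

lemma sched_nonneg: "\<sigma> \<in> Sch \<Longrightarrow> s0 \<in> X \<Longrightarrow> set h \<subseteq> Act \<times> X \<Longrightarrow> \<sigma> s0 h \<alpha> \<ge> 0"
  by (auto simp: scheds_def is_sched_def)

lemma sched_zero: "\<sigma> \<in> Sch \<Longrightarrow> s0 \<in> X \<Longrightarrow> set h \<subseteq> Act \<times> X \<Longrightarrow> \<alpha> \<notin> en (last_state s0 h) \<Longrightarrow> \<sigma> s0 h \<alpha> = 0"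
  by (auto simp: scheds_def is_sched_def)

lemma sched_sum_en: "\<sigma> \<in> Sch \<Longrightarrow> s0 \<in> X \<Longrightarrow> set h \<subseteq> Act \<times> X \<Longrightarrow> (\<Sum>\<alpha>\<in>en (last_state s0 h). \<sigma> s0 h \<alpha>) = 1"
  by (auto simp: scheds_def is_sched_def)

lemma sched_sum: 
  assumes "\<sigma> \<in> Sch" "s0 \<in> X" "set h \<subseteq> Act \<times> X"
  shows "(\<Sum>\<alpha>\<in>Act. \<sigma> s0 h \<alpha>) = 1"
proof -
  have "(\<Sum>\<alpha>\<in>Act. \<sigma> s0 h \<alpha>) = (\<Sum>\<alpha>\<in>en (last_state s0 h). \<sigma> s0 h \<alpha>)"
    by (rule sum.mono_neutral_right[OF finA en_sub]) (use sched_zero[OF assms] in auto)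
  then show ?thesis using sched_sum_en[OF assms] by simp
qed

lemma sched_sumP:
  assumes "\<sigma> \<in> Sch" "s0 \<in> X" "set h \<subseteq> Act \<times> X"
  shows "(\<Sum>\<alpha>\<in>Act. \<Sum>y\<in>X. \<sigma> s0 h \<alpha> * P (last_state s0 h) \<alpha> y) = 1"
proof -
  have "(\<Sum>\<alpha>\<in>Act. \<Sum>y\<in>X. \<sigma> s0 h \<alpha> * P (last_state s0 h) \<alpha> y) = (\<Sum>\<alpha>\<in>Act. \<sigma> s0 h \<alpha>)"
  proof (rule sum.cong[OF refl])
    fix \<alpha> assume "\<alpha> \<in> Act"
    show "(\<Sum>y\<in>X. \<sigma> s0 h \<alpha> * P (last_state s0 h) \<alpha> y) = \<sigma> s0 h \<alpha>"
    proof (cases "\<alpha> \<in> en (last_state s0 h)")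
      case True
      then show ?thesis by (simp add: sum_distrib_left[symmetric] en_sum)
    next
      case False
      then show ?thesis using sched_zero[OF assms False] by simp
    qed
  qed
  then show ?thesis using sched_sum[OF assms] by simp
qed

lemma sh_sched:
  assumes "\<sigma> \<in> Sch" "x \<in> X" "\<alpha> \<in> Act" "y \<in> X"
  shows "sh \<sigma> x \<alpha> y \<in> Sch"
proof -
  { fix s0 h assume s0: "s0 \<in> X" and h: "set h \<subseteq> Act \<times> X"
    have "(\<forall>\<beta>. sh \<sigma> x \<alpha> y s0 h \<beta> \<ge> 0) \<and>
        (\<forall>\<beta>. \<beta> \<notin> en (last_state s0 h) \<longrightarrow> sh \<sigma> x \<alpha> y s0 h \<beta> = 0) \<and>
        (\<Sum>\<beta>\<in>en (last_state s0 h). sh \<sigma> x \<alpha> y s0 h \<beta>) = 1"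
    proof (cases "s0 = y")
      case True
      have h2: "set ((\<alpha>,y)#h) \<subseteq> Act \<times> X" using h assms by auto
      show ?thesis using sched_nonneg[OF assms(1,2) h2] sched_zero[OF assms(1,2) h2] 
          sched_sum_en[OF assms(1,2) h2] True by (simp add: sh_def)
    next
      case False
      show ?thesis using sched_nonneg[OF assms(1) s0 h] sched_zero[OF assms(1) s0 h] 
          sched_sum_en[OF assms(1) s0 h] False by (simp add: sh_def)
    qed }
  then show ?thesis by (simp add: scheds_def is_sched_def)
qed

lemma md_sched:
  assumes "\<And>y. y \<in> X \<Longrightarrow> d y \<in> en y"
  shows "md d \<in> Sch"
proof -
  { fix s0 h assume s0: "s0 \<in> X" and h: "set h \<subseteq> Act \<times> X"
    have l: "last_state s0 h \<in> X" using last_state_in[OF s0 h] .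
    have "(\<Sum>\<beta>\<in>en (last_state s0 h). md d s0 h \<beta>) = 1"
      using assms[OF l] finite_en by (simp add: md_def)
    moreover have "\<forall>\<beta>. \<beta> \<notin> en (last_state s0 h) \<longrightarrow> md d s0 h \<beta> = 0"
      using assms[OF l] by (auto simp: md_def)
    ultimately have "(\<forall>\<beta>. md d s0 h \<beta> \<ge> 0) \<and>
        (\<forall>\<beta>. \<beta> \<notin> en (last_state s0 h) \<longrightarrow> md d s0 h \<beta> = 0) \<and>
        (\<Sum>\<beta>\<in>en (last_state s0 h). md d s0 h \<beta>) = 1" by (auto simp: md_def) }
  then show ?thesis by (simp add: scheds_def is_sched_def)
qed

definition dflt :: "('s,'a) sched" where
  "dflt = md (\<lambda>y. SOME \<alpha>. \<alpha> \<in> en y)"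

lemma dflt_sched: "dflt \<in> Sch"
  unfolding dflt_def
proof (rule md_sched)
  fix y assume "y \<in> X"
  then obtain a where "a \<in> en y" using en_ne by blast
  then show "(SOME \<alpha>. \<alpha> \<in> en y) \<in> en y" by (rule someI)
qed

lemma Sch_ne: "Sch \<noteq> {}" using dflt_sched by blast

definition E :: "nat \<Rightarrow> ('s,'a) sched \<Rightarrow> 's \<Rightarrow> (('a \<times> 's) list \<Rightarrow> real) \<Rightarrow> real" where
  "E n \<sigma> x f = (\<Sum>h\<in>paths_len X Act n. path_prob P \<sigma> x h * f h)"

lemma E_0: "E 0 \<sigma> x f = f []"
  by (simp add: E_def path_prob_def)

lemma E_Suc:
  "E (Suc n) \<sigma> x f = (\<Sum>\<alpha>\<in>Act. \<Sum>y\<in>X. \<sigma> x [] \<alpha> * P x \<alpha> y * E n (sh \<sigma> x \<alpha> y) y (\<lambda>h. f ((\<alpha>,y)#h)))"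
proof -
  have inj: "inj_on (\<lambda>(a,h). a # h) ((Act \<times> X) \<times> paths_len X Act n)"
    by (auto simp: inj_on_def)
  have "E (Suc n) \<sigma> x f = (\<Sum>(a,h)\<in>(Act \<times> X) \<times> paths_len X Act n. path_prob P \<sigma> x (a#h) * f (a#h))"
    unfolding E_def paths_len_Suc by (subst sum.reindex[OF inj]) (simp add: case_prod_beta')
  also have "\<dots> = (\<Sum>a\<in>Act \<times> X. \<Sum>h\<in>paths_len X Act n. path_prob P \<sigma> x (a#h) * f (a#h))"
    by (rule sum.cartesian_product[symmetric])
  also have "\<dots> = (\<Sum>\<alpha>\<in>Act. \<Sum>y\<in>X. \<Sum>h\<in>paths_len X Act n. path_prob P \<sigma> x ((\<alpha>,y)#h) * f ((\<alpha>,y)#h))"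
    by (rule sum_prod_split)
  also have "\<dots> = (\<Sum>\<alpha>\<in>Act. \<Sum>y\<in>X. \<sigma> x [] \<alpha> * P x \<alpha> y * E n (sh \<sigma> x \<alpha> y) y (\<lambda>h. f ((\<alpha>,y)#h)))"
    by (simp add: path_prob_Cons E_def sum_distrib_left mult.assoc)
  finally show ?thesis .
qed

end


context mdp
begin

lemma E_add: "E n \<sigma> x (\<lambda>h. f h + g h) = E n \<sigma> x f + E n \<sigma> x g"
  by (simp add: E_def distrib_left sum.distrib)

lemma E_diff: "E n \<sigma> x (\<lambda>h. f h - g h) = E n \<sigma> x f - E n \<sigma> x g"
  by (simp add: E_def right_diff_distrib sum_subtractf)

lemma E_cmult: "E n \<sigma> x (\<lambda>h. c * f h) = c * E n \<sigma> x f"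
  by (simp add: E_def sum_distrib_left mult.left_commute)

lemma E_cong_fun: "(\<And>h. f h = g h) \<Longrightarrow> E n \<sigma> x f = E n \<sigma> x g"
  by (simp add: E_def)

lemma E_cong_sched: "(\<And>h. \<sigma>1 x h = \<sigma>2 x h) \<Longrightarrow> E n \<sigma>1 x f = E n \<sigma>2 x f"
  unfolding E_def path_prob_def using pp_cong[of \<sigma>1 x \<sigma>2] by simp

lemma E_one: "\<sigma> \<in> Sch \<Longrightarrow> x \<in> X \<Longrightarrow> E n \<sigma> x (\<lambda>_. 1) = 1"
proof (induction n arbitrary: \<sigma> x)
  case 0
  then show ?case by (simp add: E_0)
next
  case (Suc n)
  have "E (Suc n) \<sigma> x (\<lambda>_. 1) = (\<Sum>\<alpha>\<in>Act. \<Sum>y\<in>X. \<sigma> x [] \<alpha> * P x \<alpha> y)"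
    unfolding E_Suc using Suc sh_sched by (auto intro!: sum.cong)
  also have "\<dots> = 1" using sched_sumP[OF Suc.prems, of "[]"] by simp
  finally show ?case .
qed

lemma E_const: "\<sigma> \<in> Sch \<Longrightarrow> x \<in> X \<Longrightarrow> E n \<sigma> x (\<lambda>_. c) = c"
  using E_cmult[of n \<sigma> x c "\<lambda>_. 1"] E_one by simp

lemma pp_nonneg:
  assumes "\<sigma> \<in> Sch" "s0 \<in> X" "set pre \<subseteq> Act \<times> X" "set h \<subseteq> Act \<times> X"
  shows "pp P \<sigma> s0 pre h \<ge> 0"
  using assms(3,4)
proof (induction h arbitrary: pre)
  case Nil
  then show ?case by simp
next
  case (Cons a h)
  obtain \<alpha> t where a: "a = (\<alpha>,t)" by (cases a)
  have "set (pre @ [(\<alpha>,t)]) \<subseteq> Act \<times> X" using Cons.prems a by auto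
  then have "pp P \<sigma> s0 (pre @ [(\<alpha>,t)]) h \<ge> 0" using Cons by auto
  moreover have "\<sigma> s0 pre \<alpha> \<ge> 0" using sched_nonneg[OF assms(1,2) Cons.prems(1)] .
  moreover have "P (last_state s0 pre) \<alpha> t \<ge> 0"
    using P_nonneg[OF last_state_in[OF assms(2) Cons.prems(1)]] Cons.prems a by auto
  ultimately show ?case by (simp add: a)
qed

lemma E_mono:
  assumes "\<sigma> \<in> Sch" "x \<in> X" "\<And>h. set h \<subseteq> Act \<times> X \<Longrightarrow> f h \<le> g h"
  shows "E n \<sigma> x f \<le> E n \<sigma> x g"
  unfolding E_def path_prob_def
  by (rule sum_mono, rule mult_left_mono)
     (use assms pp_nonneg[OF assms(1,2)] in \<open>auto simp: paths_len_def\<close>)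

lemma E_nonneg:
  assumes "\<sigma> \<in> Sch" "x \<in> X" "\<And>h. set h \<subseteq> Act \<times> X \<Longrightarrow> 0 \<le> f h"
  shows "0 \<le> E n \<sigma> x f"
  using E_mono[OF assms(1,2), of "\<lambda>_. 0" f n] assms(3) by (simp add: E_def)

definition Jn :: "('s \<Rightarrow> real) \<Rightarrow> nat \<Rightarrow> ('s,'a) sched \<Rightarrow> 's \<Rightarrow> real" where
  "Jn r n \<sigma> x = E n \<sigma> x (\<lambda>h. r x + (\<Sum>a\<leftarrow>h. r (snd a)))"

lemma Jn_0: "Jn r 0 \<sigma> x = r x"
  by (simp add: Jn_def E_0)

lemma sumP_mult:
  assumes "\<sigma> \<in> Sch" "x \<in> X"
  shows "(\<Sum>\<alpha>\<in>Act. \<Sum>y\<in>X. \<sigma> x [] \<alpha> * P x \<alpha> y * (c + g \<alpha> y)) =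
         c + (\<Sum>\<alpha>\<in>Act. \<Sum>y\<in>X. \<sigma> x [] \<alpha> * P x \<alpha> y * g \<alpha> y)"
proof -
  have "(\<Sum>\<alpha>\<in>Act. \<Sum>y\<in>X. \<sigma> x [] \<alpha> * P x \<alpha> y * (c + g \<alpha> y)) =
        c * (\<Sum>\<alpha>\<in>Act. \<Sum>y\<in>X. \<sigma> x [] \<alpha> * P x \<alpha> y) + (\<Sum>\<alpha>\<in>Act. \<Sum>y\<in>X. \<sigma> x [] \<alpha> * P x \<alpha> y * g \<alpha> y)"
    by (simp add: distrib_left sum.distrib sum_distrib_left mult.commute mult.left_commute)
  then show ?thesis using sched_sumP[OF assms, of "[]"] by simp
qed

lemma sumP_const:
  assumes "\<sigma> \<in> Sch" "x \<in> X"
  shows "(\<Sum>\<alpha>\<in>Act. \<Sum>y\<in>X. \<sigma> x [] \<alpha> * P x \<alpha> y * c) = c"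
  using sumP_mult[OF assms, of c "\<lambda>_ _. 0"] by simp

lemma Jn_Suc:
  assumes "\<sigma> \<in> Sch" "x \<in> X"
  shows "Jn r (Suc n) \<sigma> x = r x + (\<Sum>\<alpha>\<in>Act. \<Sum>y\<in>X. \<sigma> x [] \<alpha> * P x \<alpha> y * Jn r n (sh \<sigma> x \<alpha> y) y)"
proof -
  have "Jn r (Suc n) \<sigma> x = (\<Sum>\<alpha>\<in>Act. \<Sum>y\<in>X. \<sigma> x [] \<alpha> * P x \<alpha> y * (r x + Jn r n (sh \<sigma> x \<alpha> y) y))"
    unfolding Jn_def E_Suc
  proof (intro sum.cong refl)
    fix \<alpha> y assume "\<alpha> \<in> Act" "y \<in> X"
    then have s: "sh \<sigma> x \<alpha> y \<in> Sch" using sh_sched assms by blast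
    have "E n (sh \<sigma> x \<alpha> y) y (\<lambda>h. r x + (\<Sum>a\<leftarrow>(\<alpha>,y)#h. r (snd a))) =
          E n (sh \<sigma> x \<alpha> y) y (\<lambda>h. r x + (r y + (\<Sum>a\<leftarrow>h. r (snd a))))" by simp
    also have "\<dots> = r x + E n (sh \<sigma> x \<alpha> y) y (\<lambda>h. r y + (\<Sum>a\<leftarrow>h. r (snd a)))"
      using E_add[of n _ y "\<lambda>_. r x"] E_const[OF s \<open>y\<in>X\<close>] by simp
    finally show "\<sigma> x [] \<alpha> * P x \<alpha> y * E n (sh \<sigma> x \<alpha> y) y (\<lambda>h. r x + (\<Sum>a\<leftarrow>(\<alpha>,y)#h. r (snd a))) =
       \<sigma> x [] \<alpha> * P x \<alpha> y * (r x + E n (sh \<sigma> x \<alpha> y) y (\<lambda>h. r y + (\<Sum>a\<leftarrow>h. r (snd a))))" by simp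
  qed
  then show ?thesis using sumP_mult[OF assms] by simp
qed

lemma Jn_cong_sched: "(\<And>h. \<sigma>1 x h = \<sigma>2 x h) \<Longrightarrow> Jn r n \<sigma>1 x = Jn r n \<sigma>2 x"
  unfolding Jn_def by (rule E_cong_sched)

lemma Jn_diff: "Jn (\<lambda>x. a x - b x) n \<sigma> x = Jn a n \<sigma> x - Jn b n \<sigma> x"
proof -
  have "(\<Sum>y\<leftarrow>h. a (snd y) - b (snd y)) = (\<Sum>y\<leftarrow>h. a (snd y)) - (\<Sum>y\<leftarrow>h. b (snd y))" for h :: "('a\<times>'s) list"
    by (induction h) auto
  then show ?thesis unfolding Jn_def 
    by (subst E_diff[symmetric]) (auto intro: E_cong_fun)
qed

lemma Jn_neg: "Jn (\<lambda>x. - a x) n \<sigma> x = - Jn a n \<sigma> x"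
  using Jn_diff[of "\<lambda>_. 0" a n \<sigma> x] by (simp add: Jn_def E_def)

lemma sigmaP_nonneg: "\<sigma> \<in> Sch \<Longrightarrow> x \<in> X \<Longrightarrow> \<alpha> \<in> Act \<Longrightarrow> 0 \<le> \<sigma> x [] \<alpha> * P x \<alpha> y"
  using sched_nonneg[of \<sigma> x "[]" \<alpha>] P_nonneg[of x \<alpha> y] by simp

lemma sigmaP_pos: "\<sigma> \<in> Sch \<Longrightarrow> x \<in> X \<Longrightarrow> \<alpha> \<in> Act \<Longrightarrow> \<sigma> x [] \<alpha> * P x \<alpha> y \<noteq> 0 \<Longrightarrow> P x \<alpha> y > 0 \<and> \<sigma> x [] \<alpha> > 0 \<and> \<alpha> \<in> en x"
  using sched_nonneg[of \<sigma> x "[]" \<alpha>] P_nonneg[of x \<alpha> y] sched_zero[of \<sigma> x "[]" \<alpha>]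
  by (auto simp: less_le)

end


locale lmdp = mdp X Act P for X :: "'s set" and Act :: "'a set" and P +
  fixes lv :: "'s \<Rightarrow> nat"
  assumes lmono: "x \<in> X \<Longrightarrow> \<alpha> \<in> Act \<Longrightarrow> P x \<alpha> y > 0 \<Longrightarrow> lv x \<le> lv y"
begin

definition good :: "('s \<Rightarrow> real) \<Rightarrow> bool" where
  "good r \<longleftrightarrow> (\<forall>x\<in>X. r x \<noteq> 0 \<longrightarrow> (\<forall>\<alpha>\<in>Act. \<forall>y. P x \<alpha> y > 0 \<longrightarrow> lv x < lv y))"

definition L :: nat where "L = Max (lv ` X)"

lemma L_ge: "x \<in> X \<Longrightarrow> lv x \<le> L"
  unfolding L_def using finX by auto

definition Rb :: "('s \<Rightarrow> real) \<Rightarrow> real" where "Rb r = Max ((\<lambda>x. \<bar>r x\<bar>) ` X)"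

lemma Rb: "x \<in> X \<Longrightarrow> \<bar>r x\<bar> \<le> Rb r"
  unfolding Rb_def using finX by auto

lemma Rb_nonneg: "0 \<le> Rb r"
  using neX Rb[of _ r] by force

definition K :: "('s \<Rightarrow> real) \<Rightarrow> real" where "K r = (real L + 1) * Rb r"

lemma K_nonneg: "0 \<le> K r" unfolding K_def using Rb_nonneg by simp

lemma Jn_bound_aux:
  assumes "good r" "\<sigma> \<in> Sch" "x \<in> X"
  shows "\<bar>Jn r n \<sigma> x\<bar> \<le> (real L - real (lv x) + 1) * Rb r"
  using assms(2,3)
proof (induction n arbitrary: \<sigma> x)
  case 0
  have "1 \<le> real L - real (lv x) + 1" using L_ge[OF 0(2)] by simp
  then have "Rb r \<le> (real L - real (lv x) + 1) * Rb r"
    using Rb_nonneg[of r] mult_right_mono[of 1 _ "Rb r"] by simp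
  then show ?case using Rb[OF 0(2), of r] by (simp add: Jn_0)
next
  case (Suc n)
  define ind where "ind = (if r x = 0 then 0 else 1::real)"
  have s: "\<bar>\<Sum>\<alpha>\<in>Act. \<Sum>y\<in>X. \<sigma> x [] \<alpha> * P x \<alpha> y * Jn r n (sh \<sigma> x \<alpha> y) y\<bar> \<le>
        (\<Sum>\<alpha>\<in>Act. \<Sum>y\<in>X. \<sigma> x [] \<alpha> * P x \<alpha> y * ((real L - real (lv x) + 1 - ind) * Rb r))"
  proof -
    have "\<bar>\<Sum>\<alpha>\<in>Act. \<Sum>y\<in>X. \<sigma> x [] \<alpha> * P x \<alpha> y * Jn r n (sh \<sigma> x \<alpha> y) y\<bar> \<le>
         (\<Sum>\<alpha>\<in>Act. \<bar>\<Sum>y\<in>X. \<sigma> x [] \<alpha> * P x \<alpha> y * Jn r n (sh \<sigma> x \<alpha> y) y\<bar>)" by (rule sum_abs)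
    also have "\<dots> \<le> (\<Sum>\<alpha>\<in>Act. \<Sum>y\<in>X. \<bar>\<sigma> x [] \<alpha> * P x \<alpha> y * Jn r n (sh \<sigma> x \<alpha> y) y\<bar>)"
      by (intro sum_mono sum_abs)
    also have "\<dots> \<le> (\<Sum>\<alpha>\<in>Act. \<Sum>y\<in>X. \<sigma> x [] \<alpha> * P x \<alpha> y * ((real L - real (lv x) + 1 - ind) * Rb r))"
    proof (intro sum_mono)
      fix \<alpha> y assume a: "\<alpha> \<in> Act" and y: "y \<in> X"
      show "\<bar>\<sigma> x [] \<alpha> * P x \<alpha> y * Jn r n (sh \<sigma> x \<alpha> y) y\<bar> \<le> \<sigma> x [] \<alpha> * P x \<alpha> y * ((real L - real (lv x) + 1 - ind) * Rb r)"
      proof (cases "\<sigma> x [] \<alpha> * P x \<alpha> y = 0")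
        case True
        show ?thesis unfolding True by simp
      next
        case False
        have nn: "0 \<le> \<sigma> x [] \<alpha> * P x \<alpha> y" using sigmaP_nonneg Suc.prems a by blast
        have pos: "P x \<alpha> y > 0" using sigmaP_pos[OF Suc.prems a False] by blast
        have IH: "\<bar>Jn r n (sh \<sigma> x \<alpha> y) y\<bar> \<le> (real L - real (lv y) + 1) * Rb r"
          using Suc.IH[OF sh_sched[OF Suc.prems a y] y] .
        have "lv x \<le> lv y" using lmono[OF Suc.prems(2) a pos] .
        moreover have "r x \<noteq> 0 \<Longrightarrow> lv x < lv y" using assms(1) Suc.prems(2) a pos by (auto simp: good_def)
        ultimately have "real L - real (lv y) + 1 \<le> real L - real (lv x) + 1 - ind"
          by (auto simp: ind_def)
        then have "\<bar>Jn r n (sh \<sigma> x \<alpha> y) y\<bar> \<le> (real L - real (lv x) + 1 - ind) * Rb r"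
          using IH Rb_nonneg[of r] by (meson mult_right_mono order_trans)
        then have "\<sigma> x [] \<alpha> * P x \<alpha> y * \<bar>Jn r n (sh \<sigma> x \<alpha> y) y\<bar> \<le> \<sigma> x [] \<alpha> * P x \<alpha> y * ((real L - real (lv x) + 1 - ind) * Rb r)"
          using nn by (rule mult_left_mono)
        moreover have "\<bar>\<sigma> x [] \<alpha> * P x \<alpha> y * Jn r n (sh \<sigma> x \<alpha> y) y\<bar> = \<sigma> x [] \<alpha> * P x \<alpha> y * \<bar>Jn r n (sh \<sigma> x \<alpha> y) y\<bar>"
          using nn by (simp only: abs_mult[of "\<sigma> x [] \<alpha> * P x \<alpha> y"] abs_of_nonneg)
        ultimately show ?thesis by simp
      qed
    qed
    finally show ?thesis .
  qed
  have c: "(\<Sum>\<alpha>\<in>Act. \<Sum>y\<in>X. \<sigma> x [] \<alpha> * P x \<alpha> y * ((real L - real (lv x) + 1 - ind) * Rb r)) = (real L - real (lv x) + 1 - ind) * Rb r"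
    using sumP_const[OF Suc.prems] .
  have "\<bar>Jn r (Suc n) \<sigma> x\<bar> \<le> \<bar>r x\<bar> + \<bar>\<Sum>\<alpha>\<in>Act. \<Sum>y\<in>X. \<sigma> x [] \<alpha> * P x \<alpha> y * Jn r n (sh \<sigma> x \<alpha> y) y\<bar>"
    unfolding Jn_Suc[OF Suc.prems] by (rule abs_triangle_ineq)
  then have "\<bar>Jn r (Suc n) \<sigma> x\<bar> \<le> \<bar>r x\<bar> + (real L - real (lv x) + 1 - ind) * Rb r"
    using s c by linarith
  moreover have "\<bar>r x\<bar> \<le> ind * Rb r" using Rb[OF Suc.prems(2), of r] by (auto simp: ind_def)
  ultimately show ?case by (simp add: algebra_simps)
qed

lemma Jn_bound:
  assumes "good r" "\<sigma> \<in> Sch" "x \<in> X"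
  shows "\<bar>Jn r n \<sigma> x\<bar> \<le> K r"
proof -
  have "(real L - real (lv x) + 1) * Rb r \<le> (real L + 1) * Rb r"
    using Rb_nonneg[of r] by (simp add: mult_right_mono)
  then show ?thesis using Jn_bound_aux[OF assms, of n] unfolding K_def by linarith
qed

lemma Jn_incr:
  assumes "\<And>x. x \<in> X \<Longrightarrow> r x \<ge> 0" "\<sigma> \<in> Sch" "x \<in> X"
  shows "Jn r n \<sigma> x \<le> Jn r (Suc n) \<sigma> x"
  using assms(2,3)
proof (induction n arbitrary: \<sigma> x)
  case 0
  have "0 \<le> (\<Sum>\<alpha>\<in>Act. \<Sum>y\<in>X. \<sigma> x [] \<alpha> * P x \<alpha> y * Jn r 0 (sh \<sigma> x \<alpha> y) y)"
    using assms(1) sigmaP_nonneg[OF 0] by (auto intro!: sum_nonneg simp: Jn_0)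
  then show ?case unfolding Jn_Suc[OF 0] by (simp add: Jn_0)
next
  case (Suc n)
  have "(\<Sum>\<alpha>\<in>Act. \<Sum>y\<in>X. \<sigma> x [] \<alpha> * P x \<alpha> y * Jn r n (sh \<sigma> x \<alpha> y) y) \<le>
        (\<Sum>\<alpha>\<in>Act. \<Sum>y\<in>X. \<sigma> x [] \<alpha> * P x \<alpha> y * Jn r (Suc n) (sh \<sigma> x \<alpha> y) y)"
  proof (intro sum_mono)
    fix \<alpha> y assume a: "\<alpha> \<in> Act" and y: "y \<in> X"
    show "\<sigma> x [] \<alpha> * P x \<alpha> y * Jn r n (sh \<sigma> x \<alpha> y) y \<le> \<sigma> x [] \<alpha> * P x \<alpha> y * Jn r (Suc n) (sh \<sigma> x \<alpha> y) y"
      using Suc.IH[OF sh_sched[OF Suc.prems a y] y] sigmaP_nonneg[OF Suc.prems a, of y]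
      by (rule mult_left_mono)
  qed
  then show ?case unfolding Jn_Suc[OF Suc.prems, of r] Jn_Suc[OF Suc.prems, of r "Suc n"] by simp
qed

lemma good_pos: assumes "good r" shows "good (\<lambda>x. max (r x) 0)"
  unfolding good_def
proof (rule ballI, rule impI)
  fix x assume x: "x \<in> X" and m: "max (r x) 0 \<noteq> 0"
  then have "r x \<noteq> 0" by auto
  then show "\<forall>\<alpha>\<in>Act. \<forall>y. 0 < P x \<alpha> y \<longrightarrow> lv x < lv y" using assms x unfolding good_def by blast
qed

lemma good_negpart: assumes "good r" shows "good (\<lambda>x. max (- r x) 0)"
  unfolding good_def
proof (rule ballI, rule impI)
  fix x assume x: "x \<in> X" and m: "max (- r x) 0 \<noteq> 0"
  then have "r x \<noteq> 0" by auto
  then show "\<forall>\<alpha>\<in>Act. \<forall>y. 0 < P x \<alpha> y \<longrightarrow> lv x < lv y" using assms x unfolding good_def by blast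
qed

lemma good_neg: "good r \<Longrightarrow> good (\<lambda>x. - r x)"
  unfolding good_def by auto

lemma Jn_conv_nonneg:
  assumes "good r" "\<And>x. x \<in> X \<Longrightarrow> r x \<ge> 0" "\<sigma> \<in> Sch" "x \<in> X"
  shows "convergent (\<lambda>n. Jn r n \<sigma> x)"
proof -
  have "incseq (\<lambda>n. Jn r n \<sigma> x)" 
    by (rule incseq_SucI) (use Jn_incr[OF assms(2-4)] in auto)
  moreover have "\<And>n. Jn r n \<sigma> x \<le> K r" using Jn_bound[OF assms(1,3,4)] by (meson abs_le_D1)
  ultimately show ?thesis
    using incseq_convergent[of "\<lambda>n. Jn r n \<sigma> x" "K r"] convergent_def by blast
qed

lemma Jn_conv:
  assumes "good r" "\<sigma> \<in> Sch" "x \<in> X"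
  shows "convergent (\<lambda>n. Jn r n \<sigma> x)"
proof -
  have eq: "(\<lambda>x. max (r x) 0 - max (- r x) 0) = r" by (auto simp: fun_eq_iff)
  have "convergent (\<lambda>n. Jn (\<lambda>x. max (r x) 0) n \<sigma> x - Jn (\<lambda>x. max (- r x) 0) n \<sigma> x)"
    by (intro convergent_diff Jn_conv_nonneg good_pos good_negpart assms) auto
  then show ?thesis unfolding Jn_diff[of "\<lambda>x. max (r x) 0" "\<lambda>x. max (- r x) 0", symmetric] eq .
qed

definition J :: "('s \<Rightarrow> real) \<Rightarrow> ('s,'a) sched \<Rightarrow> 's \<Rightarrow> real" where
  "J r \<sigma> x = lim (\<lambda>n. Jn r n \<sigma> x)"

lemma J_eq: "J r \<sigma> x = exp_total_rew X Act P \<sigma> x r"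
  by (simp add: J_def exp_total_rew_def Jn_def E_def)

lemma J_lim: "good r \<Longrightarrow> \<sigma> \<in> Sch \<Longrightarrow> x \<in> X \<Longrightarrow> (\<lambda>n. Jn r n \<sigma> x) \<longlonglongrightarrow> J r \<sigma> x"
  unfolding J_def using Jn_conv convergent_LIMSEQ_iff by blast

lemma J_bound: "good r \<Longrightarrow> \<sigma> \<in> Sch \<Longrightarrow> x \<in> X \<Longrightarrow> \<bar>J r \<sigma> x\<bar> \<le> K r"
proof -
  assume a: "good r" "\<sigma> \<in> Sch" "x \<in> X"
  have "(\<lambda>n. \<bar>Jn r n \<sigma> x\<bar>) \<longlonglongrightarrow> \<bar>J r \<sigma> x\<bar>" using J_lim[OF a] by (rule tendsto_rabs)
  then show ?thesis using Jn_bound[OF a] by (intro LIMSEQ_le_const2) auto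
qed

lemma J_cong_sched: "(\<And>h. \<sigma>1 x h = \<sigma>2 x h) \<Longrightarrow> J r \<sigma>1 x = J r \<sigma>2 x"
  unfolding J_def using Jn_cong_sched by metis

lemma J_neg: "good r \<Longrightarrow> \<sigma> \<in> Sch \<Longrightarrow> x \<in> X \<Longrightarrow> J (\<lambda>x. - r x) \<sigma> x = - J r \<sigma> x"
proof -
  assume a: "good r" "\<sigma> \<in> Sch" "x \<in> X"
  have "(\<lambda>n. - Jn r n \<sigma> x) \<longlonglongrightarrow> - J r \<sigma> x" using J_lim[OF a] by (rule tendsto_minus)
  then show ?thesis unfolding J_def Jn_neg by (rule limI)
qed

lemma J_Suc:
  assumes "good r" "\<sigma> \<in> Sch" "x \<in> X"
  shows "J r \<sigma> x = r x + (\<Sum>\<alpha>\<in>Act. \<Sum>y\<in>X. \<sigma> x [] \<alpha> * P x \<alpha> y * J r (sh \<sigma> x \<alpha> y) y)"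
proof -
  have "(\<lambda>n. Jn r (Suc n) \<sigma> x) \<longlonglongrightarrow> J r \<sigma> x"
    using J_lim[OF assms] LIMSEQ_Suc by blast
  moreover have "(\<lambda>n. Jn r (Suc n) \<sigma> x) \<longlonglongrightarrow> r x + (\<Sum>\<alpha>\<in>Act. \<Sum>y\<in>X. \<sigma> x [] \<alpha> * P x \<alpha> y * J r (sh \<sigma> x \<alpha> y) y)"
    unfolding Jn_Suc[OF assms(2,3)]
    by (intro tendsto_intros J_lim assms sh_sched) auto
  ultimately show ?thesis using LIMSEQ_unique by blast
qed

end


definition comp :: "('s,'a) sched \<Rightarrow> 's \<Rightarrow> 'a \<Rightarrow> ('s \<Rightarrow> ('s,'a) sched) \<Rightarrow> ('s,'a) sched" where
  "comp d0 x \<alpha> \<tau> = (\<lambda>s0 h. if s0 = x then (case h of [] \<Rightarrow> (\<lambda>\<beta>. if \<beta> = \<alpha> then 1 else 0)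
                                  | (b#h') \<Rightarrow> \<tau> (snd b) (snd b) h') else d0 s0 h)"

locale opt = lmdp X Act P lv for X :: "'s set" and Act :: "'a set" and P lv +
  fixes r :: "'s \<Rightarrow> real"
  assumes gr: "good r"
begin

definition v :: "'s \<Rightarrow> real" where "v x = (SUP \<sigma>\<in>Sch. J r \<sigma> x)"

lemma bdd: "x \<in> X \<Longrightarrow> bdd_above ((\<lambda>\<sigma>. J r \<sigma> x) ` Sch)"
  by (rule bdd_aboveI2[where M = "K r"]) (use J_bound[OF gr] in \<open>auto simp: abs_le_iff\<close>)

lemma J_le_v: "\<sigma> \<in> Sch \<Longrightarrow> x \<in> X \<Longrightarrow> J r \<sigma> x \<le> v x"
  unfolding v_def by (rule cSUP_upper[OF _ bdd])

lemma near_opt: "x \<in> X \<Longrightarrow> e > 0 \<Longrightarrow> \<exists>\<sigma>\<in>Sch. v x - e < J r \<sigma> x"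
proof -
  assume x: "x \<in> X" and e: "e > 0"
  have "v x - e < (SUP \<sigma>\<in>Sch. J r \<sigma> x)" using e by (simp add: v_def)
  then show ?thesis using less_cSUP_iff[OF Sch_ne bdd[OF x]] by blast
qed

lemma v_le_K: "x \<in> X \<Longrightarrow> v x \<le> K r"
  unfolding v_def by (rule cSUP_least[OF Sch_ne]) (use J_bound[OF gr] in \<open>auto simp: abs_le_iff\<close>)

definition Q :: "'s \<Rightarrow> 'a \<Rightarrow> real" where "Q x \<alpha> = (\<Sum>y\<in>X. P x \<alpha> y * v y)"

lemma Bell_le:
  assumes "\<sigma> \<in> Sch" "x \<in> X"
  shows "J r \<sigma> x \<le> r x + (\<Sum>\<alpha>\<in>Act. \<sigma> x [] \<alpha> * Q x \<alpha>)"
proof -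
  have "(\<Sum>\<alpha>\<in>Act. \<Sum>y\<in>X. \<sigma> x [] \<alpha> * P x \<alpha> y * J r (sh \<sigma> x \<alpha> y) y) \<le>
        (\<Sum>\<alpha>\<in>Act. \<Sum>y\<in>X. \<sigma> x [] \<alpha> * P x \<alpha> y * v y)"
  proof (intro sum_mono)
    fix \<alpha> y assume a: "\<alpha> \<in> Act" and y: "y \<in> X"
    show "\<sigma> x [] \<alpha> * P x \<alpha> y * J r (sh \<sigma> x \<alpha> y) y \<le> \<sigma> x [] \<alpha> * P x \<alpha> y * v y"
      using J_le_v[OF sh_sched[OF assms a y] y] sigmaP_nonneg[OF assms a, of y] by (rule mult_left_mono)
  qed
  also have "\<dots> = (\<Sum>\<alpha>\<in>Act. \<sigma> x [] \<alpha> * Q x \<alpha>)"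
    by (simp add: Q_def sum_distrib_left mult.assoc)
  finally show ?thesis unfolding J_Suc[OF gr assms] by simp
qed

lemma comp_sched:
  assumes "x \<in> X" "\<alpha> \<in> en x" "\<And>y. y \<in> X \<Longrightarrow> \<tau> y \<in> Sch"
  shows "comp dflt x \<alpha> \<tau> \<in> Sch"
proof -
  { fix s0 h assume s0: "s0 \<in> X" and h: "set h \<subseteq> Act \<times> X"
    have "(\<forall>\<beta>. comp dflt x \<alpha> \<tau> s0 h \<beta> \<ge> 0) \<and>
        (\<forall>\<beta>. \<beta> \<notin> en (last_state s0 h) \<longrightarrow> comp dflt x \<alpha> \<tau> s0 h \<beta> = 0) \<and>
        (\<Sum>\<beta>\<in>en (last_state s0 h). comp dflt x \<alpha> \<tau> s0 h \<beta>) = 1"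
    proof (cases "s0 = x")
      case True
      show ?thesis
      proof (cases h)
        case Nil
        then show ?thesis using True assms(2) finite_en by (auto simp: comp_def)
      next
        case (Cons b h')
        obtain \<beta> y where b: "b = (\<beta>,y)" by (cases b)
        have y: "y \<in> X" and h': "set h' \<subseteq> Act \<times> X" using h Cons b by auto
        have eq: "comp dflt x \<alpha> \<tau> s0 h = \<tau> y y h'" using True Cons b by (simp add: comp_def)
        have ls: "last_state s0 h = last_state y h'" using Cons b by simp
        show ?thesis unfolding eq ls using sched_nonneg[OF assms(3)[OF y] y h'] sched_zero[OF assms(3)[OF y] y h']
          sched_sum_en[OF assms(3)[OF y] y h'] by auto
      qed
    next
      case False
      then have eq: "comp dflt x \<alpha> \<tau> s0 h = dflt s0 h" by (simp add: comp_def)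
      show ?thesis unfolding eq using sched_nonneg[OF dflt_sched s0 h] sched_zero[OF dflt_sched s0 h]
          sched_sum_en[OF dflt_sched s0 h] by auto
    qed }
  then show ?thesis by (simp add: scheds_def is_sched_def)
qed

lemma J_comp:
  assumes "x \<in> X" "\<alpha> \<in> en x" "\<And>y. y \<in> X \<Longrightarrow> \<tau> y \<in> Sch"
  shows "J r (comp dflt x \<alpha> \<tau>) x = r x + (\<Sum>y\<in>X. P x \<alpha> y * J r (\<tau> y) y)"
proof -
  have a: "\<alpha> \<in> Act" using assms(2) en_sub by blast
  have "J r (comp dflt x \<alpha> \<tau>) x = r x + (\<Sum>\<beta>\<in>Act. \<Sum>y\<in>X. comp dflt x \<alpha> \<tau> x [] \<beta> * P x \<beta> y * J r (sh (comp dflt x \<alpha> \<tau>) x \<beta> y) y)"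
    by (rule J_Suc[OF gr comp_sched[OF assms] assms(1)])
  also have "\<dots> = r x + (\<Sum>\<beta>\<in>Act. if \<beta> = \<alpha> then (\<Sum>y\<in>X. P x \<alpha> y * J r (\<tau> y) y) else 0)"
  proof -
    have "\<And>\<beta> y. J r (sh (comp dflt x \<alpha> \<tau>) x \<beta> y) y = J r (\<tau> y) y"
      by (rule J_cong_sched) (simp add: sh_def comp_def)
    then show ?thesis by (auto intro!: sum.cong simp: comp_def)
  qed
  also have "\<dots> = r x + (\<Sum>y\<in>X. P x \<alpha> y * J r (\<tau> y) y)"
    using a finA by simp
  finally show ?thesis .
qed

lemma Bell_ge:
  assumes "x \<in> X" "\<alpha> \<in> en x"
  shows "r x + Q x \<alpha> \<le> v x"
proof (rule field_le_epsilon)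
  fix e :: real assume e: "0 < e"
  define \<tau> where "\<tau> y = (if y \<in> X then (SOME \<sigma>. \<sigma> \<in> Sch \<and> v y - e < J r \<sigma> y) else dflt)" for y
  have \<tau>: "\<tau> y \<in> Sch \<and> v y - e < J r (\<tau> y) y" if "y \<in> X" for y
  proof -
    obtain \<sigma> where "\<sigma> \<in> Sch \<and> v y - e < J r \<sigma> y" using near_opt[OF \<open>y \<in> X\<close> e] by blast
    then have "(SOME \<sigma>. \<sigma> \<in> Sch \<and> v y - e < J r \<sigma> y) \<in> Sch \<and> v y - e < J r (SOME \<sigma>. \<sigma> \<in> Sch \<and> v y - e < J r \<sigma> y) y"
      by (rule someI[where P="\<lambda>\<sigma>. \<sigma> \<in> Sch \<and> v y - e < J r \<sigma> y"])
    then show ?thesis unfolding \<tau>_def using that by simp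
  qed
  have \<tau>s: "\<And>y. y \<in> X \<Longrightarrow> \<tau> y \<in> Sch" using \<tau> by blast
  have a: "\<alpha> \<in> Act" using assms(2) en_sub by blast
  have "r x + Q x \<alpha> - e = r x + (\<Sum>y\<in>X. P x \<alpha> y * (v y - e))"
    using en_sum[OF assms(2)] by (simp add: Q_def right_diff_distrib sum_subtractf sum_distrib_right[symmetric])
  also have "\<dots> \<le> r x + (\<Sum>y\<in>X. P x \<alpha> y * J r (\<tau> y) y)"
  proof -
    have "(\<Sum>y\<in>X. P x \<alpha> y * (v y - e)) \<le> (\<Sum>y\<in>X. P x \<alpha> y * J r (\<tau> y) y)"
    proof (rule sum_mono)
      fix y assume "y \<in> X"
      then show "P x \<alpha> y * (v y - e) \<le> P x \<alpha> y * J r (\<tau> y) y"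
        using \<tau> P_nonneg[OF assms(1) a, of y] by (simp add: mult_left_mono less_imp_le)
    qed
    then show ?thesis by simp
  qed
  also have "\<dots> = J r (comp dflt x \<alpha> \<tau>) x" using J_comp[OF assms \<tau>s] by simp
  also have "\<dots> \<le> v x" using J_le_v[OF comp_sched[OF assms \<tau>s] assms(1)] .
  finally show "r x + Q x \<alpha> \<le> v x + e" by simp
qed

lemma Bell_exists:
  assumes "x \<in> X"
  shows "\<exists>\<alpha>\<in>en x. r x + Q x \<alpha> = v x"
proof -
  define Mx where "Mx = Max (Q x ` en x)"
  have fin: "finite (Q x ` en x)" using finite_en by simp
  have ne: "Q x ` en x \<noteq> {}" using en_ne[OF assms] by simp
  obtain \<alpha>0 where a0: "\<alpha>0 \<in> en x" "Q x \<alpha>0 = Mx" using Max_in[OF fin ne] unfolding Mx_def by auto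
  have QM: "\<And>\<alpha>. \<alpha> \<in> en x \<Longrightarrow> Q x \<alpha> \<le> Mx" unfolding Mx_def using fin by auto
  have "v x \<le> r x + Mx"
    unfolding v_def
  proof (rule cSUP_least[OF Sch_ne])
    fix \<sigma> assume s: "\<sigma> \<in> Sch"
    have "(\<Sum>\<alpha>\<in>Act. \<sigma> x [] \<alpha> * Q x \<alpha>) \<le> (\<Sum>\<alpha>\<in>Act. \<sigma> x [] \<alpha> * Mx)"
    proof (rule sum_mono)
      fix \<alpha> assume "\<alpha> \<in> Act"
      show "\<sigma> x [] \<alpha> * Q x \<alpha> \<le> \<sigma> x [] \<alpha> * Mx"
      proof (cases "\<alpha> \<in> en x")
        case True
        then show ?thesis using QM sched_nonneg[OF s assms, of "[]"] by (simp add: mult_left_mono)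
      next
        case False
        then show ?thesis using sched_zero[OF s assms, of "[]"] by simp
      qed
    qed
    also have "\<dots> = Mx" using sched_sum[OF s assms, of "[]"] by (simp add: sum_distrib_right[symmetric])
    finally show "J r \<sigma> x \<le> r x + Mx" using Bell_le[OF s assms] by simp
  qed
  moreover have "r x + Q x \<alpha>0 \<le> v x" using Bell_ge[OF assms a0(1)] .
  ultimately show ?thesis using a0 by force
qed

definition Opt :: "'s \<Rightarrow> 'a set" where "Opt x = {\<alpha>\<in>en x. r x + Q x \<alpha> = v x}"

lemma Opt_ne: "x \<in> X \<Longrightarrow> Opt x \<noteq> {}"
  using Bell_exists unfolding Opt_def by blast

lemma Q_le: "x \<in> X \<Longrightarrow> \<alpha> \<in> en x \<Longrightarrow> r x + Q x \<alpha> \<le> v x"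
  by (rule Bell_ge)

end


fun evp :: "('s \<Rightarrow> bool) \<Rightarrow> ('s \<Rightarrow> 'a \<Rightarrow> bool) \<Rightarrow> 's \<Rightarrow> ('a \<times> 's) list \<Rightarrow> bool" where
  "evp Zp Op x [] = False"
| "evp Zp Op x ((\<alpha>,y)#h) = (Zp x \<and> (\<not> Op x \<alpha> \<or> evp Zp Op y h))"

lemma evp_out: "\<not> Zp x \<Longrightarrow> \<not> evp Zp Op x h"
  by (cases h) auto

context mdp
begin

definition rho :: "('s \<Rightarrow> bool) \<Rightarrow> ('s \<Rightarrow> 'a \<Rightarrow> bool) \<Rightarrow> nat \<Rightarrow> ('s,'a) sched \<Rightarrow> 's \<Rightarrow> real" where
  "rho Zp Op n \<sigma> x = E n \<sigma> x (\<lambda>h. if evp Zp Op x h then 1 else 0)"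

lemma rho_0: "rho Zp Op 0 \<sigma> x = 0"
  by (simp add: rho_def E_0)

lemma rho_out: "\<not> Zp x \<Longrightarrow> rho Zp Op n \<sigma> x = 0"
  by (simp add: rho_def E_def evp_out)

lemma rho_Suc:
  assumes "Zp x" "\<sigma> \<in> Sch" "x \<in> X"
  shows "rho Zp Op (Suc n) \<sigma> x = (\<Sum>\<alpha>\<in>Act. \<Sum>y\<in>X. \<sigma> x [] \<alpha> * P x \<alpha> y * (if Op x \<alpha> then rho Zp Op n (sh \<sigma> x \<alpha> y) y else 1))"
  unfolding rho_def E_Suc
proof (intro sum.cong refl)
  fix \<alpha> y assume a: "\<alpha> \<in> Act" and y: "y \<in> X"
  show "\<sigma> x [] \<alpha> * P x \<alpha> y * E n (sh \<sigma> x \<alpha> y) y (\<lambda>h. if evp Zp Op x ((\<alpha>, y) # h) then 1 else 0) =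
        \<sigma> x [] \<alpha> * P x \<alpha> y * (if Op x \<alpha> then E n (sh \<sigma> x \<alpha> y) y (\<lambda>h. if evp Zp Op y h then 1 else 0) else 1)"
    using assms(1) E_one[OF sh_sched[OF assms(2,3) a y] y, of n] by simp
qed

lemma rho_nonneg: "\<sigma> \<in> Sch \<Longrightarrow> x \<in> X \<Longrightarrow> 0 \<le> rho Zp Op n \<sigma> x"
  unfolding rho_def by (rule E_nonneg) auto

lemma rho_le1: "\<sigma> \<in> Sch \<Longrightarrow> x \<in> X \<Longrightarrow> rho Zp Op n \<sigma> x \<le> 1"
  unfolding rho_def using E_mono[of \<sigma> x "\<lambda>h. if evp Zp Op x h then 1 else 0" "\<lambda>_. 1" n] E_one[of \<sigma> x n] by simp

lemma rho_incr: "\<sigma> \<in> Sch \<Longrightarrow> x \<in> X \<Longrightarrow> rho Zp Op n \<sigma> x \<le> rho Zp Op (Suc n) \<sigma> x"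
proof (induction n arbitrary: \<sigma> x)
  case 0
  then show ?case using rho_nonneg by (simp add: rho_0)
next
  case (Suc n)
  show ?case
  proof (cases "Zp x")
    case False
    then show ?thesis by (simp add: rho_out)
  next
    case True
    show ?thesis unfolding rho_Suc[of Zp x \<sigma> Op, OF True Suc.prems]
    proof (intro sum_mono)
      fix \<alpha> y assume a: "\<alpha> \<in> Act" and y: "y \<in> X"
      show "\<sigma> x [] \<alpha> * P x \<alpha> y * (if Op x \<alpha> then rho Zp Op n (sh \<sigma> x \<alpha> y) y else 1)
         \<le> \<sigma> x [] \<alpha> * P x \<alpha> y * (if Op x \<alpha> then rho Zp Op (Suc n) (sh \<sigma> x \<alpha> y) y else 1)"
        using Suc.IH[OF sh_sched[OF Suc.prems a y] y] sigmaP_nonneg[OF Suc.prems a, of y]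
        by (auto intro: mult_left_mono)
    qed
  qed
qed

lemma md_first: "md d x [] \<beta> = (if \<beta> = d x then 1 else 0)"
  by (simp add: md_def)

lemma sh_md: "sh (md d) x \<beta> y y h = md d y h"
  by (simp add: sh_def md_def)

lemma sum_md:
  assumes "d x \<in> Act"
  shows "(\<Sum>\<beta>\<in>Act. \<Sum>y\<in>X. md d x [] \<beta> * P x \<beta> y * g \<beta> y) = (\<Sum>y\<in>X. P x (d x) y * g (d x) y)"
proof -
  have "(\<Sum>\<beta>\<in>Act. \<Sum>y\<in>X. md d x [] \<beta> * P x \<beta> y * g \<beta> y) = (\<Sum>\<beta>\<in>Act. if \<beta> = d x then (\<Sum>y\<in>X. P x (d x) y * g (d x) y) else 0)"
    by (rule sum.cong) (auto simp: md_first)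
  also have "\<dots> = (\<Sum>y\<in>X. P x (d x) y * g (d x) y)" using assms finA by simp
  finally show ?thesis .
qed

end

context lmdp
begin

lemma Jn_md:
  assumes "\<And>y. y \<in> X \<Longrightarrow> d y \<in> en y" "x \<in> X"
  shows "Jn r (Suc n) (md d) x = r x + (\<Sum>y\<in>X. P x (d x) y * Jn r n (md d) y)"
proof -
  have dA: "d x \<in> Act" using assms en_sub by blast
  have "\<And>\<beta> y. Jn r n (sh (md d) x \<beta> y) y = Jn r n (md d) y"
    by (rule Jn_cong_sched) (rule sh_md)
  then have "Jn r (Suc n) (md d) x = r x + (\<Sum>\<beta>\<in>Act. \<Sum>y\<in>X. md d x [] \<beta> * P x \<beta> y * Jn r n (md d) y)"
    using Jn_Suc[OF md_sched[OF assms(1)] assms(2)] by simp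
  then show ?thesis using sum_md[where d=d and x=x and g="\<lambda>\<beta> y. Jn r n (md d) y", OF dA] by simp
qed

lemma J_md:
  assumes "good r" "\<And>y. y \<in> X \<Longrightarrow> d y \<in> en y" "x \<in> X"
  shows "J r (md d) x = r x + (\<Sum>y\<in>X. P x (d x) y * J r (md d) y)"
proof -
  have dA: "d x \<in> Act" using assms en_sub by blast
  have "\<And>\<beta> y. J r (sh (md d) x \<beta> y) y = J r (md d) y"
    by (rule J_cong_sched) (rule sh_md)
  then have "J r (md d) x = r x + (\<Sum>\<beta>\<in>Act. \<Sum>y\<in>X. md d x [] \<beta> * P x \<beta> y * J r (md d) y)"
    using J_Suc[OF assms(1) md_sched[OF assms(2)] assms(3)] by simp
  then show ?thesis using sum_md[where d=d and x=x and g="\<lambda>\<beta> y. J r (md d) y", OF dA] by simp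
qed

lemma J_md_zero:
  assumes "good r" "\<And>y. y \<in> X \<Longrightarrow> d y \<in> en y" "R \<subseteq> X" "\<And>w. w \<in> R \<Longrightarrow> r w = 0"
    "\<And>w u. w \<in> R \<Longrightarrow> P w (d w) u > 0 \<Longrightarrow> u \<in> R" "x \<in> R"
  shows "J r (md d) x = 0"
proof -
  have "\<forall>w\<in>R. Jn r n (md d) w = 0" for n
  proof (induction n)
    case 0
    then show ?case using assms(4) by (simp add: Jn_0)
  next
    case (Suc n)
    show ?case
    proof
      fix w assume w: "w \<in> R"
      have wX: "w \<in> X" using w assms(3) by blast
      have dA: "d w \<in> Act" using assms(2)[OF wX] en_sub by blast
      have "(\<Sum>y\<in>X. P w (d w) y * Jn r n (md d) y) = 0"
      proof (rule sum.neutral, rule ballI)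
        fix y assume y: "y \<in> X"
        show "P w (d w) y * Jn r n (md d) y = 0"
        proof (cases "P w (d w) y > 0")
          case True
          then show ?thesis using assms(5)[OF w True] Suc.IH by simp
        next
          case False
          then show ?thesis using P_nonneg[OF wX dA, of y] by simp
        qed
      qed
      then show "Jn r (Suc n) (md d) w = 0" using Jn_md[OF assms(2) wX, of r n] assms(4)[OF w] by simp
    qed
  qed
  then have "(\<lambda>n. Jn r n (md d) x) \<longlonglongrightarrow> 0" using assms(6) by simp
  moreover have "(\<lambda>n. Jn r n (md d) x) \<longlonglongrightarrow> J r (md d) x"
    using J_lim[OF assms(1) md_sched[OF assms(2)]] assms(3,6) by blast
  ultimately show ?thesis using LIMSEQ_unique by blast
qed

lemma succ_exists:
  assumes "x \<in> X" "\<alpha> \<in> en x"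
  shows "\<exists>u\<in>X. P x \<alpha> u > 0"
proof -
  have "(\<Sum>u\<in>X. P x \<alpha> u) \<noteq> 0" using en_sum[OF assms(2)] by simp
  then obtain u where u: "u \<in> X" "P x \<alpha> u \<noteq> 0" by (meson sum.neutral)
  moreover have "P x \<alpha> u \<ge> 0" using P_nonneg[OF assms(1)] assms(2) en_sub by blast
  ultimately show ?thesis by force
qed

end


context opt
begin

fun Attn :: "nat \<Rightarrow> 's set" where
  "Attn 0 = {x\<in>X. r x \<noteq> 0}"
| "Attn (Suc n) = Attn n \<union> {x\<in>X. \<exists>\<alpha>\<in>Opt x. \<exists>y\<in>Attn n. P x \<alpha> y > 0}"

definition Att :: "'s set" where "Att = (\<Union>n. Attn n)"

definition rank :: "'s \<Rightarrow> nat" where "rank x = (LEAST n. x \<in> Attn n)"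

lemma Attn_X: "Attn n \<subseteq> X"
  by (induction n) auto

lemma Att_X: "Att \<subseteq> X"
  using Attn_X unfolding Att_def by blast

lemma step_exists:
  assumes "x \<in> Att" "r x = 0"
  shows "\<exists>\<alpha>\<in>Opt x. \<exists>y. y \<in> Att \<and> P x \<alpha> y > 0 \<and> rank y < rank x"
proof -
  obtain n where n: "x \<in> Attn n" using assms(1) unfolding Att_def by blast
  have xr: "x \<in> Attn (rank x)" unfolding rank_def using n by (rule LeastI)
  have "rank x \<noteq> 0"
  proof
    assume "rank x = 0"
    then have "x \<in> Attn 0" using xr by simp
    then show False using assms(2) by simp
  qed
  then obtain m where m: "rank x = Suc m" by (cases "rank x") auto
  have "x \<notin> Attn m" using not_less_Least[of m "\<lambda>n. x \<in> Attn n"] m unfolding rank_def by simp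
  then obtain \<alpha> y where a: "\<alpha> \<in> Opt x" "y \<in> Attn m" "P x \<alpha> y > 0" using xr m by auto
  have "rank y \<le> m" unfolding rank_def using a(2) by (rule Least_le)
  then have "rank y < rank x" using m by simp
  moreover have "y \<in> Att" using a(2) unfolding Att_def by blast
  ultimately show ?thesis using a(1,3) by blast
qed

definition dd :: "'s \<Rightarrow> 'a" where
  "dd x = (if x \<in> Att \<and> r x = 0 then (SOME \<alpha>. \<alpha> \<in> Opt x \<and> (\<exists>y. y \<in> Att \<and> P x \<alpha> y > 0 \<and> rank y < rank x))
           else (SOME \<alpha>. \<alpha> \<in> Opt x))"

lemma dd_prop:
  assumes "x \<in> X"
  shows "dd x \<in> Opt x" and "x \<in> Att \<Longrightarrow> r x = 0 \<Longrightarrow> \<exists>y. y \<in> Att \<and> P x (dd x) y > 0 \<and> rank y < rank x"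
proof -
  have A: "dd x \<in> Opt x \<and> (\<exists>y. y \<in> Att \<and> P x (dd x) y > 0 \<and> rank y < rank x)" if c: "x \<in> Att" "r x = 0"
  proof -
    obtain \<alpha> where "\<alpha> \<in> Opt x \<and> (\<exists>y. y \<in> Att \<and> P x \<alpha> y > 0 \<and> rank y < rank x)"
      using step_exists[OF c] by blast
    then have "(SOME \<alpha>. \<alpha> \<in> Opt x \<and> (\<exists>y. y \<in> Att \<and> P x \<alpha> y > 0 \<and> rank y < rank x)) \<in> Opt x \<and>
       (\<exists>y. y \<in> Att \<and> P x (SOME \<alpha>. \<alpha> \<in> Opt x \<and> (\<exists>y. y \<in> Att \<and> P x \<alpha> y > 0 \<and> rank y < rank x)) y > 0 \<and> rank y < rank x)"
      by (rule someI[where P="\<lambda>\<alpha>. \<alpha> \<in> Opt x \<and> (\<exists>y. y \<in> Att \<and> P x \<alpha> y > 0 \<and> rank y < rank x)"])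
    then show ?thesis using c unfolding dd_def by simp
  qed
  have B: "dd x \<in> Opt x" if c: "\<not> (x \<in> Att \<and> r x = 0)"
  proof -
    obtain \<alpha> where "\<alpha> \<in> Opt x" using Opt_ne[OF assms] by blast
    then have "(SOME \<alpha>. \<alpha> \<in> Opt x) \<in> Opt x" by (rule someI)
    then show ?thesis using c unfolding dd_def by (simp only: if_False)
  qed
  show "dd x \<in> Opt x" using A B by blast
  show "x \<in> Att \<Longrightarrow> r x = 0 \<Longrightarrow> \<exists>y. y \<in> Att \<and> P x (dd x) y > 0 \<and> rank y < rank x" using A by blast
qed

lemma dd_en: "x \<in> X \<Longrightarrow> dd x \<in> en x"
  using dd_prop(1) unfolding Opt_def by blast

lemma desc:
  assumes "R \<subseteq> X" "\<And>w u. w \<in> R \<Longrightarrow> P w (dd w) u > 0 \<Longrightarrow> u \<in> R"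
  shows "x \<in> R \<Longrightarrow> x \<in> Att \<Longrightarrow> \<exists>w\<in>R. r w \<noteq> 0"
proof (induction "rank x" arbitrary: x rule: less_induct)
  case less
  show ?case
  proof (cases "r x = 0")
    case False
    then show ?thesis using less.prems by blast
  next
    case True
    obtain y where y: "y \<in> Att" "P x (dd x) y > 0" "rank y < rank x"
      using dd_prop(2)[of x] less.prems True assms(1) by blast
    have "y \<in> R" using assms(2)[OF less.prems(1) y(2)] .
    then show ?thesis using less.hyps[OF y(3)] y(1) by blast
  qed
qed

end


context opt
begin

lemma Att_pred:
  assumes "y \<in> X" "\<alpha> \<in> Opt y" "P y \<alpha> u > 0" "u \<in> Att"
  shows "y \<in> Att"
proof -
  obtain n where "u \<in> Attn n" using assms(4) unfolding Att_def by blast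
  then have "y \<in> Attn (Suc n)" using assms(1-3) by auto
  then show ?thesis unfolding Att_def by blast
qed

lemma Opt_Act: "\<alpha> \<in> Opt x \<Longrightarrow> \<alpha> \<in> Act"
  unfolding Opt_def using en_sub by blast

lemma avg_eq:
  assumes "x \<in> X" "\<alpha> \<in> en x" "(\<Sum>u\<in>X. P x \<alpha> u * f u) = M"
    "\<And>u. u \<in> X \<Longrightarrow> P x \<alpha> u > 0 \<Longrightarrow> f u \<le> M" "P x \<alpha> u > 0"
  shows "f u = M"
proof -
  have aA: "\<alpha> \<in> Act" using assms(2) en_sub by blast
  have uX: "u \<in> X" using P_pos_in[OF assms(1) aA assms(5)] .
  have "(\<Sum>u\<in>X. P x \<alpha> u * (M - f u)) = (\<Sum>u\<in>X. P x \<alpha> u) * M - (\<Sum>u\<in>X. P x \<alpha> u * f u)"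
    by (simp add: right_diff_distrib sum_subtractf sum_distrib_right)
  also have "\<dots> = 0" using en_sum[OF assms(2)] assms(3) by simp
  finally have s0: "(\<Sum>u\<in>X. P x \<alpha> u * (M - f u)) = 0" .
  have nn: "\<forall>w\<in>X. 0 \<le> P x \<alpha> w * (M - f w)"
  proof
    fix w assume w: "w \<in> X"
    show "0 \<le> P x \<alpha> w * (M - f w)"
    proof (cases "P x \<alpha> w > 0")
      case True
      then show ?thesis using assms(4)[OF w True] by simp
    next
      case False
      then have "P x \<alpha> w = 0" using P_nonneg[OF assms(1) aA, of w] by simp
      then show ?thesis by simp
    qed
  qed
  have iff: "(\<Sum>w\<in>X. P x \<alpha> w * (M - f w)) = 0 \<longleftrightarrow> (\<forall>w\<in>X. P x \<alpha> w * (M - f w) = 0)"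
    by (rule sum_nonneg_eq_0_iff[OF finX]) (use nn in blast)
  have "\<forall>w\<in>X. P x \<alpha> w * (M - f w) = 0" using iff s0 by blast
  then have "P x \<alpha> u * (M - f u) = 0" using uX by blast
  then show ?thesis using assms(5) assms(4)[OF uX assms(5)] by simp
qed

lemma W_lemma:
  assumes x: "x \<in> X" and vx: "v x > 0"
  shows "x \<in> Att"
proof (rule ccontr)
  assume xA: "x \<notin> Att"
  define W where "W = X - Att"
  have finW: "finite W" using finX unfolding W_def by simp
  have xW: "x \<in> W" using x xA unfolding W_def by simp
  define M where "M = Max (v ` W)"
  have vM: "\<And>y. y \<in> W \<Longrightarrow> v y \<le> M" unfolding M_def using finW by simp
  have Mpos: "M > 0" using vM[OF xW] vx by simp
  define Z where "Z = {y\<in>W. v y = M}"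
  have "M \<in> v ` W" unfolding M_def using finW xW by (intro Max_in) auto
  then obtain z where zZ: "z \<in> Z" unfolding Z_def by force
  have ZX: "Z \<subseteq> X" unfolding Z_def W_def by blast
  have W_r: "\<And>y. y \<in> W \<Longrightarrow> r y = 0"
  proof (rule ccontr)
    fix y assume y: "y \<in> W" and "r y \<noteq> 0"
    then have "y \<in> Attn 0" unfolding W_def by simp
    then show False using y unfolding W_def Att_def by blast
  qed
  have Z_closed: "u \<in> Z" if y: "y \<in> Z" and a: "\<alpha> \<in> Opt y" and p: "P y \<alpha> u > 0" for y \<alpha> u
  proof -
    have yX: "y \<in> X" using y ZX by blast
    have aen: "\<alpha> \<in> en y" using a unfolding Opt_def by blast
    have succW: "w \<in> W" if "w \<in> X" "P y \<alpha> w > 0" for w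
      using Att_pred[OF yX a that(2)] y that(1) unfolding Z_def W_def by blast
    have "(\<Sum>u\<in>X. P y \<alpha> u * v u) = M"
      using a W_r[of y] y unfolding Opt_def Q_def Z_def by auto
    then have "v u = M" using avg_eq[OF yX aen _ _ p, of v M] succW vM by blast
    moreover have "u \<in> W" using succW P_pos_in[OF yX Opt_Act[OF a] p] p by blast
    ultimately show ?thesis unfolding Z_def by blast
  qed
  define NO where "NO = {(y,\<alpha>). y \<in> Z \<and> \<alpha> \<in> en y \<and> \<alpha> \<notin> Opt y}"
  have finNO: "finite NO"
  proof -
    have "NO \<subseteq> X \<times> Act" unfolding NO_def using ZX en_sub by blast
    then show ?thesis using finX finA finite_subset by blast
  qed
  define \<eta> where "\<eta> = Min (insert 1 ((\<lambda>(y,\<alpha>). M - Q y \<alpha>) ` NO))"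
  have NO_pos: "M - Q y \<alpha> > 0" if "(y,\<alpha>) \<in> NO" for y \<alpha>
  proof -
    have y: "y \<in> Z" "\<alpha> \<in> en y" "\<alpha> \<notin> Opt y" using that unfolding NO_def by auto
    have yX: "y \<in> X" using y ZX by blast
    have "r y + Q y \<alpha> \<le> v y" using Q_le[OF yX y(2)] .
    moreover have "r y + Q y \<alpha> \<noteq> v y" using y unfolding Opt_def by blast
    moreover have "r y = 0" "v y = M" using y(1) W_r unfolding Z_def by auto
    ultimately show ?thesis by simp
  qed
  have eta_pos: "\<eta> > 0"
    unfolding \<eta>_def using finNO NO_pos by (auto simp: Min_gr_iff)
  have eta_le: "\<eta> \<le> M - Q y \<alpha>" if "y \<in> Z" "\<alpha> \<in> en y" "\<alpha> \<notin> Opt y" for y \<alpha>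
  proof -
    have "(y,\<alpha>) \<in> NO" using that unfolding NO_def by simp
    then show ?thesis unfolding \<eta>_def using finNO by (auto intro!: Min_le)
  qed
  define Zp where "Zp = (\<lambda>y. y \<in> Z)"
  define Op where "Op = (\<lambda>y \<alpha>. \<alpha> \<in> Opt y)"
  define Kr where "Kr = K r"
  have Kr: "Kr \<ge> 0" unfolding Kr_def by (rule K_nonneg)
  have bA: "\<forall>\<sigma> y. \<sigma> \<in> Sch \<longrightarrow> y \<in> Z \<longrightarrow> J r \<sigma> y \<le> M - \<eta> * rho Zp Op n \<sigma> y" for n
  proof (induction n)
    case 0
    show ?case using J_le_v ZX unfolding Z_def by (auto simp: rho_0)
  next
    case (Suc n)
    show ?case
    proof (intro allI impI)
      fix \<sigma> y assume s: "\<sigma> \<in> Sch" and y: "y \<in> Z"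
      have yX: "y \<in> X" using y ZX by blast
      have ry: "r y = 0" using y W_r unfolding Z_def by blast
      have zy: "Zp y" using y by (simp add: Zp_def)
      have "(\<Sum>\<alpha>\<in>Act. \<Sum>u\<in>X. \<sigma> y [] \<alpha> * P y \<alpha> u * J r (sh \<sigma> y \<alpha> u) u) \<le>
            (\<Sum>\<alpha>\<in>Act. \<Sum>u\<in>X. \<sigma> y [] \<alpha> * P y \<alpha> u * (M + (- \<eta>) * (if Op y \<alpha> then rho Zp Op n (sh \<sigma> y \<alpha> u) u else 1)))"
      proof (rule sum_mono)
        fix \<alpha> assume a: "\<alpha> \<in> Act"
        show "(\<Sum>u\<in>X. \<sigma> y [] \<alpha> * P y \<alpha> u * J r (sh \<sigma> y \<alpha> u) u) \<le>
              (\<Sum>u\<in>X. \<sigma> y [] \<alpha> * P y \<alpha> u * (M + (- \<eta>) * (if Op y \<alpha> then rho Zp Op n (sh \<sigma> y \<alpha> u) u else 1)))"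
        proof (cases "Op y \<alpha>")
          case True
          show ?thesis
          proof (rule sum_mono)
            fix u assume u: "u \<in> X"
            show "\<sigma> y [] \<alpha> * P y \<alpha> u * J r (sh \<sigma> y \<alpha> u) u \<le>
                  \<sigma> y [] \<alpha> * P y \<alpha> u * (M + (- \<eta>) * (if Op y \<alpha> then rho Zp Op n (sh \<sigma> y \<alpha> u) u else 1))"
            proof (cases "\<sigma> y [] \<alpha> * P y \<alpha> u = 0")
              case True
              show ?thesis unfolding True by simp
            next
              case False
              have pos: "P y \<alpha> u > 0" using sigmaP_pos[OF s yX a False] by blast
              have uZ: "u \<in> Z" using Z_closed[OF y _ pos] True unfolding Op_def by blast
              have "J r (sh \<sigma> y \<alpha> u) u \<le> M - \<eta> * rho Zp Op n (sh \<sigma> y \<alpha> u) u"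
                using Suc.IH sh_sched[OF s yX a u] uZ by blast
              then show ?thesis using True sigmaP_nonneg[OF s yX a, of u] by (simp add: mult_left_mono)
            qed
          qed
        next
          case False
          show ?thesis
          proof (cases "\<sigma> y [] \<alpha> = 0")
            case True
            then show ?thesis by simp
          next
            case s0: False
            have aen: "\<alpha> \<in> en y" using sched_zero[OF s yX, of "[]" \<alpha>] s0 by auto
            have sn: "0 \<le> \<sigma> y [] \<alpha>" using sched_nonneg[OF s yX, of "[]" \<alpha>] by simp
            have "(\<Sum>u\<in>X. \<sigma> y [] \<alpha> * P y \<alpha> u * J r (sh \<sigma> y \<alpha> u) u) \<le> (\<Sum>u\<in>X. \<sigma> y [] \<alpha> * P y \<alpha> u * v u)"
              by (rule sum_mono, rule mult_left_mono)
                 (use J_le_v sh_sched[OF s yX a] sigmaP_nonneg[OF s yX a] in auto)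
            also have "\<dots> = \<sigma> y [] \<alpha> * Q y \<alpha>" by (simp add: Q_def sum_distrib_left mult.assoc)
            also have "\<dots> \<le> \<sigma> y [] \<alpha> * (M - \<eta>)"
              using eta_le[OF y aen] False sn unfolding Op_def by (simp add: mult_left_mono)
            also have "\<dots> = (\<Sum>u\<in>X. \<sigma> y [] \<alpha> * P y \<alpha> u * (M + (- \<eta>) * (if Op y \<alpha> then rho Zp Op n (sh \<sigma> y \<alpha> u) u else 1)))"
              using False en_sum[OF aen] by (simp add: sum_distrib_left[symmetric] sum_distrib_right[symmetric] mult.assoc)
            finally show ?thesis .
          qed
        qed
      qed
      also have "\<dots> = M + (\<Sum>\<alpha>\<in>Act. \<Sum>u\<in>X. \<sigma> y [] \<alpha> * P y \<alpha> u * ((- \<eta>) * (if Op y \<alpha> then rho Zp Op n (sh \<sigma> y \<alpha> u) u else 1)))"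
        by (rule sumP_mult[OF s yX])
      also have "\<dots> = M + (- \<eta>) * rho Zp Op (Suc n) \<sigma> y"
        unfolding rho_Suc[of Zp y \<sigma> Op n, OF zy s yX] by (simp add: sum_distrib_left mult.assoc mult.left_commute)
      finally show "J r \<sigma> y \<le> M - \<eta> * rho Zp Op (Suc n) \<sigma> y"
        unfolding J_Suc[OF gr s yX] using ry by simp
    qed
  qed
  have bB: "\<forall>\<sigma> y. \<sigma> \<in> Sch \<longrightarrow> y \<in> Z \<longrightarrow> Jn r n \<sigma> y \<le> Kr * rho Zp Op n \<sigma> y" for n
  proof (induction n)
    case 0
    show ?case using W_r unfolding Z_def by (auto simp: rho_0 Jn_0)
  next
    case (Suc n)
    show ?case
    proof (intro allI impI)
      fix \<sigma> y assume s: "\<sigma> \<in> Sch" and y: "y \<in> Z"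
      have yX: "y \<in> X" using y ZX by blast
      have ry: "r y = 0" using y W_r unfolding Z_def by blast
      have zy: "Zp y" using y by (simp add: Zp_def)
      have "(\<Sum>\<alpha>\<in>Act. \<Sum>u\<in>X. \<sigma> y [] \<alpha> * P y \<alpha> u * Jn r n (sh \<sigma> y \<alpha> u) u) \<le>
            (\<Sum>\<alpha>\<in>Act. \<Sum>u\<in>X. \<sigma> y [] \<alpha> * P y \<alpha> u * (Kr * (if Op y \<alpha> then rho Zp Op n (sh \<sigma> y \<alpha> u) u else 1)))"
      proof (intro sum_mono)
        fix \<alpha> u assume a: "\<alpha> \<in> Act" and u: "u \<in> X"
        show "\<sigma> y [] \<alpha> * P y \<alpha> u * Jn r n (sh \<sigma> y \<alpha> u) u \<le>
              \<sigma> y [] \<alpha> * P y \<alpha> u * (Kr * (if Op y \<alpha> then rho Zp Op n (sh \<sigma> y \<alpha> u) u else 1))"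
        proof (cases "\<sigma> y [] \<alpha> * P y \<alpha> u = 0")
          case True
          show ?thesis unfolding True by simp
        next
          case False
          have pos: "P y \<alpha> u > 0" using sigmaP_pos[OF s yX a False] by blast
          have "Jn r n (sh \<sigma> y \<alpha> u) u \<le> Kr * (if Op y \<alpha> then rho Zp Op n (sh \<sigma> y \<alpha> u) u else 1)"
          proof (cases "Op y \<alpha>")
            case True
            have uZ: "u \<in> Z" using Z_closed[OF y _ pos] True unfolding Op_def by blast
            then show ?thesis using Suc.IH sh_sched[OF s yX a u] True by simp
          next
            case False
            then show ?thesis using Jn_bound[OF gr sh_sched[OF s yX a u] u, of n] unfolding Kr_def by simp
          qed
          then show ?thesis using sigmaP_nonneg[OF s yX a, of u] by (simp add: mult_left_mono)
        qed
      qed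
      also have "\<dots> = Kr * rho Zp Op (Suc n) \<sigma> y"
        unfolding rho_Suc[of Zp y \<sigma> Op n, OF zy s yX] by (simp add: sum_distrib_left mult.assoc mult.left_commute)
      finally show "Jn r (Suc n) \<sigma> y \<le> Kr * rho Zp Op (Suc n) \<sigma> y"
        unfolding Jn_Suc[OF s yX] using ry by simp
    qed
  qed
  have Jbd: "J r \<sigma> y \<le> Kr * M / (Kr + \<eta>)" if s: "\<sigma> \<in> Sch" and y: "y \<in> Z" for \<sigma> y
  proof -
    have yX: "y \<in> X" using y ZX by blast
    let ?\<rho> = "\<lambda>n. rho Zp Op n \<sigma> y"
    have inc: "incseq ?\<rho>" by (rule incseq_SucI) (use rho_incr[OF s yX] in auto)
    have bd: "\<And>n. ?\<rho> n \<le> 1" using rho_le1[OF s yX] by blast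
    have bd': "\<forall>n. ?\<rho> n \<le> 1" using bd by blast
    obtain t where t: "?\<rho> \<longlonglongrightarrow> t" and le_t': "\<forall>n. ?\<rho> n \<le> t"
      using incseq_convergent[OF inc bd'] by blast
    have le_t: "\<And>n. ?\<rho> n \<le> t" using le_t' by blast
    have A: "J r \<sigma> y \<le> M - \<eta> * t"
    proof (rule LIMSEQ_le_const)
      show "(\<lambda>n. M - \<eta> * ?\<rho> n) \<longlonglongrightarrow> M - \<eta> * t" by (intro tendsto_intros t)
      show "\<exists>N. \<forall>n\<ge>N. J r \<sigma> y \<le> M - \<eta> * ?\<rho> n" using bA s y by blast
    qed
    have B: "J r \<sigma> y \<le> Kr * t"
    proof (rule LIMSEQ_le_const2)
      show "(\<lambda>n. Jn r n \<sigma> y) \<longlonglongrightarrow> J r \<sigma> y" by (rule J_lim[OF gr s yX])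
      show "\<exists>N. \<forall>n\<ge>N. Jn r n \<sigma> y \<le> Kr * t"
        using bB s y le_t Kr by (meson mult_left_mono order_trans)
    qed
    have pos: "Kr + \<eta> > 0" using Kr eta_pos by simp
    have "J r \<sigma> y * (Kr + \<eta>) \<le> Kr * M"
    proof (cases "t * (Kr + \<eta>) \<le> M")
      case True
      have "J r \<sigma> y * (Kr + \<eta>) \<le> Kr * t * (Kr + \<eta>)" using B pos by (simp add: mult_right_mono)
      also have "\<dots> = Kr * (t * (Kr + \<eta>))" by simp
      also have "\<dots> \<le> Kr * M" using True Kr by (simp add: mult_left_mono)
      finally show ?thesis .
    next
      case False
      have "J r \<sigma> y * (Kr + \<eta>) \<le> (M - \<eta> * t) * (Kr + \<eta>)" using A pos by (simp add: mult_right_mono)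
      also have "\<dots> = Kr * M + \<eta> * (M - t * (Kr + \<eta>))" by (simp add: algebra_simps)
      also have "\<dots> \<le> Kr * M" using False eta_pos by (simp add: mult_nonneg_nonpos)
      finally show ?thesis .
    qed
    then show ?thesis using pos by (simp add: pos_le_divide_eq)
  qed
  have zX: "z \<in> X" using zZ ZX by blast
  have "v z \<le> Kr * M / (Kr + \<eta>)"
    unfolding v_def by (rule cSUP_least[OF Sch_ne]) (use Jbd zZ in auto)
  moreover have "Kr * M / (Kr + \<eta>) < M"
  proof -
    have pos: "Kr + \<eta> > 0" using Kr eta_pos by simp
    have "Kr * M < M * (Kr + \<eta>)" using Mpos eta_pos by (simp add: algebra_simps)
    then show ?thesis using pos by (simp add: divide_less_eq)
  qed
  moreover have "v z = M" using zZ unfolding Z_def by blast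
  ultimately show False by simp
qed

end


context opt
begin

lemma J_dd_eq_v:
  assumes "x \<in> X"
  shows "J r (md dd) x = v x"
proof -
  define \<delta> where "\<delta> y = v y - J r (md dd) y" for y
  have ddv: "\<And>y. y \<in> X \<Longrightarrow> dd y \<in> en y" by (rule dd_en)
  have mdS: "md dd \<in> Sch" by (rule md_sched[OF ddv])
  have \<delta>nn: "\<And>y. y \<in> X \<Longrightarrow> 0 \<le> \<delta> y" unfolding \<delta>_def using J_le_v[OF mdS] by simp
  have \<delta>eq: "\<delta> y = (\<Sum>u\<in>X. P y (dd y) u * \<delta> u)" if y: "y \<in> X" for y
  proof -
    have "v y = r y + Q y (dd y)" using dd_prop(1)[OF y] unfolding Opt_def by simp
    moreover have "J r (md dd) y = r y + (\<Sum>u\<in>X. P y (dd y) u * J r (md dd) u)"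
      by (rule J_md[OF gr ddv y])
    ultimately show ?thesis unfolding \<delta>_def Q_def by (simp add: right_diff_distrib sum_subtractf)
  qed
  define M where "M = Max (\<delta> ` X)"
  have \<delta>M: "\<And>y. y \<in> X \<Longrightarrow> \<delta> y \<le> M" unfolding M_def using finX by simp
  have "M \<le> 0"
  proof (rule ccontr)
    assume "\<not> M \<le> 0"
    then have Mpos: "M > 0" by simp
    define Z where "Z = {y\<in>X. \<delta> y = M}"
    have "M \<in> \<delta> ` X" unfolding M_def using finX neX by (intro Max_in) auto
    then have Zne: "Z \<noteq> {}" unfolding Z_def by force
    have finZ: "finite Z" using finX unfolding Z_def by simp
    have Zc: "u \<in> Z" if y: "y \<in> Z" and p: "P y (dd y) u > 0" for y u
    proof -
      have yX: "y \<in> X" using y unfolding Z_def by blast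
      have "(\<Sum>u\<in>X. P y (dd y) u * \<delta> u) = M" using \<delta>eq[OF yX] y unfolding Z_def by simp
      then have "\<delta> u = M" using avg_eq[OF yX ddv[OF yX] _ _ p, of \<delta> M] \<delta>M by blast
      moreover have "u \<in> X" using P_pos_in[OF yX _ p] ddv[OF yX] en_sub by blast
      ultimately show ?thesis unfolding Z_def by blast
    qed
    define lz where "lz = Max (lv ` Z)"
    have "lz \<in> lv ` Z" unfolding lz_def using finZ Zne by (intro Max_in) auto
    then obtain z where zZ: "z \<in> Z" and lzz: "lv z = lz" by force
    have lvZ: "\<And>y. y \<in> Z \<Longrightarrow> lv y \<le> lz" unfolding lz_def using finZ by simp
    define R where "R = {w\<in>Z. lv w = lz}"
    have RX: "R \<subseteq> X" unfolding R_def Z_def by blast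
    have Rc: "u \<in> R" if w: "w \<in> R" and p: "P w (dd w) u > 0" for w u
    proof -
      have wZ: "w \<in> Z" using w unfolding R_def by blast
      have wX: "w \<in> X" using w RX by blast
      have uZ: "u \<in> Z" using Zc[OF wZ p] .
      have "lv w \<le> lv u" using lmono[OF wX _ p] ddv[OF wX] en_sub by blast
      then have "lv u = lz" using lvZ[OF uZ] w unfolding R_def by simp
      then show ?thesis using uZ unfolding R_def by blast
    qed
    have Rr: "r w = 0" if w: "w \<in> R" for w
    proof (rule ccontr)
      assume rw: "r w \<noteq> 0"
      have wX: "w \<in> X" using w RX by blast
      obtain u where u: "u \<in> X" "P w (dd w) u > 0" using succ_exists[OF wX ddv[OF wX]] by blast
      have "lv w < lv u" using gr rw wX u ddv[OF wX] en_sub unfolding good_def by blast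
      moreover have "u \<in> R" using Rc[OF w u(2)] .
      ultimately show False using w unfolding R_def by simp
    qed
    have zR: "z \<in> R" using zZ lzz unfolding R_def by blast
    have "J r (md dd) z = 0" by (rule J_md_zero[OF gr ddv RX Rr Rc zR])
    then have "v z = M" using zZ unfolding Z_def \<delta>_def by simp
    then have "z \<in> Att" using W_lemma[of z] zZ Mpos unfolding Z_def by simp
    then have "\<exists>w\<in>R. r w \<noteq> 0" using desc[OF RX Rc zR] by simp
    then show False using Rr by blast
  qed
  then have "\<delta> x \<le> 0" using \<delta>M[OF assms] by simp
  then show ?thesis using \<delta>nn[OF assms] unfolding \<delta>_def by simp
qed

theorem attain:
  assumes "x \<in> X"
  shows "\<exists>\<sigma>\<in>Sch. \<forall>\<sigma>'\<in>Sch. J r \<sigma>' x \<le> J r \<sigma> x"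
proof -
  have mdS: "md dd \<in> Sch" by (rule md_sched[OF dd_en])
  show ?thesis using J_dd_eq_v[OF assms] J_le_v[OF _ assms] mdS by metis
qed

end


definition mix :: "real \<Rightarrow> ('s \<Rightarrow> 'a \<Rightarrow> 's \<Rightarrow> real) \<Rightarrow> ('s,'a) sched \<Rightarrow> ('s,'a) sched \<Rightarrow> ('s,'a) sched" where
  "mix l P \<sigma>1 \<sigma>2 = (\<lambda>s0 h \<alpha>.
     if l * pp P \<sigma>1 s0 [] h + (1 - l) * pp P \<sigma>2 s0 [] h = 0 then \<sigma>1 s0 h \<alpha>
     else (l * pp P \<sigma>1 s0 [] h * \<sigma>1 s0 h \<alpha> + (1 - l) * pp P \<sigma>2 s0 [] h * \<sigma>2 s0 h \<alpha>) /
          (l * pp P \<sigma>1 s0 [] h + (1 - l) * pp P \<sigma>2 s0 [] h))"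

lemma visits_Cons: "visits x ((\<alpha>,y)#h) T \<longleftrightarrow> x \<in> T \<or> visits y h T"
  by (auto simp: visits_def)

lemma visits_Nil: "visits x [] T \<longleftrightarrow> x \<in> T"
  by (auto simp: visits_def)

context mdp
begin

lemma mix_sched:
  assumes "0 \<le> l" "l \<le> 1" "\<sigma>1 \<in> Sch" "\<sigma>2 \<in> Sch"
  shows "mix l P \<sigma>1 \<sigma>2 \<in> Sch"
proof -
  { fix s0 h assume s0: "s0 \<in> X" and h: "set h \<subseteq> Act \<times> X"
    define p1 where "p1 = pp P \<sigma>1 s0 [] h"
    define p2 where "p2 = pp P \<sigma>2 s0 [] h"
    have p1: "p1 \<ge> 0" unfolding p1_def by (rule pp_nonneg[OF assms(3) s0 _ h]) simp
    have p2: "p2 \<ge> 0" unfolding p2_def by (rule pp_nonneg[OF assms(4) s0 _ h]) simp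
    have D: "l * p1 + (1 - l) * p2 \<ge> 0" using p1 p2 assms(1,2) by simp
    have eq: "mix l P \<sigma>1 \<sigma>2 s0 h = (\<lambda>\<alpha>. if l * p1 + (1 - l) * p2 = 0 then \<sigma>1 s0 h \<alpha>
       else (l * p1 * \<sigma>1 s0 h \<alpha> + (1 - l) * p2 * \<sigma>2 s0 h \<alpha>) / (l * p1 + (1 - l) * p2))"
      unfolding mix_def p1_def p2_def by simp
    have nn: "\<forall>\<beta>. mix l P \<sigma>1 \<sigma>2 s0 h \<beta> \<ge> 0"
      unfolding eq using sched_nonneg[OF assms(3) s0 h] sched_nonneg[OF assms(4) s0 h] p1 p2 assms(1,2) D
      by (auto intro!: divide_nonneg_nonneg add_nonneg_nonneg mult_nonneg_nonneg)
    have z: "\<forall>\<beta>. \<beta> \<notin> en (last_state s0 h) \<longrightarrow> mix l P \<sigma>1 \<sigma>2 s0 h \<beta> = 0"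
      unfolding eq using sched_zero[OF assms(3) s0 h] sched_zero[OF assms(4) s0 h] by auto
    have sm: "(\<Sum>\<beta>\<in>en (last_state s0 h). mix l P \<sigma>1 \<sigma>2 s0 h \<beta>) = 1"
    proof (cases "l * p1 + (1 - l) * p2 = 0")
      case True
      then show ?thesis unfolding eq using sched_sum_en[OF assms(3) s0 h] by simp
    next
      case False
      have "(\<Sum>\<beta>\<in>en (last_state s0 h). mix l P \<sigma>1 \<sigma>2 s0 h \<beta>) =
        (l * p1 * (\<Sum>\<beta>\<in>en (last_state s0 h). \<sigma>1 s0 h \<beta>) + (1 - l) * p2 * (\<Sum>\<beta>\<in>en (last_state s0 h). \<sigma>2 s0 h \<beta>)) / (l * p1 + (1 - l) * p2)"
        unfolding eq using False by (simp add: sum_divide_distrib[symmetric] sum.distrib sum_distrib_left)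
      also have "\<dots> = 1" using False sched_sum_en[OF assms(3) s0 h] sched_sum_en[OF assms(4) s0 h] by simp
      finally show ?thesis .
    qed
    note nn z sm }
  then show ?thesis by (simp add: scheds_def is_sched_def)
qed

lemma mix_pp:
  assumes "0 \<le> l" "l \<le> 1" "\<sigma>1 \<in> Sch" "\<sigma>2 \<in> Sch" "s0 \<in> X"
  shows "set h \<subseteq> Act \<times> X \<Longrightarrow> pp P (mix l P \<sigma>1 \<sigma>2) s0 [] h = l * pp P \<sigma>1 s0 [] h + (1 - l) * pp P \<sigma>2 s0 [] h"
proof (induction h rule: rev_induct)
  case Nil
  then show ?case by simp
next
  case (snoc a h)
  obtain \<alpha> t where a: "a = (\<alpha>,t)" by (cases a)
  have h: "set h \<subseteq> Act \<times> X" using snoc.prems by auto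
  define p1 where "p1 = pp P \<sigma>1 s0 [] h"
  define p2 where "p2 = pp P \<sigma>2 s0 [] h"
  have p1: "p1 \<ge> 0" unfolding p1_def by (rule pp_nonneg[OF assms(3,5) _ h]) simp
  have p2: "p2 \<ge> 0" unfolding p2_def by (rule pp_nonneg[OF assms(4,5) _ h]) simp
  have IH: "pp P (mix l P \<sigma>1 \<sigma>2) s0 [] h = l * p1 + (1 - l) * p2" using snoc.IH[OF h] p1_def p2_def by simp
  have m: "mix l P \<sigma>1 \<sigma>2 s0 h \<alpha> = (if l * p1 + (1 - l) * p2 = 0 then \<sigma>1 s0 h \<alpha>
       else (l * p1 * \<sigma>1 s0 h \<alpha> + (1 - l) * p2 * \<sigma>2 s0 h \<alpha>) / (l * p1 + (1 - l) * p2))"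
    unfolding mix_def p1_def p2_def by simp
  show ?case
  proof (cases "l * p1 + (1 - l) * p2 = 0")
    case True
    have "l * p1 = 0" "(1 - l) * p2 = 0" using True p1 p2 assms(1,2)
      by (smt (verit) mult_nonneg_nonneg)+
    then show ?thesis unfolding a pp_snoc using IH True by (auto simp: p1_def[symmetric] p2_def[symmetric])
  next
    case False
    define D where "D = l * p1 + (1 - l) * p2"
    define Pt where "Pt = P (last_state s0 h) \<alpha> t"
    have Dm: "D * mix l P \<sigma>1 \<sigma>2 s0 h \<alpha> = l * p1 * \<sigma>1 s0 h \<alpha> + (1 - l) * p2 * \<sigma>2 s0 h \<alpha>"
      using False m unfolding D_def by simp
    have "pp P (mix l P \<sigma>1 \<sigma>2) s0 [] (h @ [a]) = D * mix l P \<sigma>1 \<sigma>2 s0 h \<alpha> * Pt"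
      unfolding a pp_snoc using IH by (simp add: D_def Pt_def)
    also have "\<dots> = l * (p1 * \<sigma>1 s0 h \<alpha> * Pt) + (1 - l) * (p2 * \<sigma>2 s0 h \<alpha> * Pt)"
      unfolding Dm by (simp add: algebra_simps)
    also have "\<dots> = l * pp P \<sigma>1 s0 [] (h @ [a]) + (1 - l) * pp P \<sigma>2 s0 [] (h @ [a])"
      unfolding a pp_snoc by (simp add: p1_def p2_def Pt_def)
    finally show ?thesis .
  qed
qed

definition Rn :: "nat \<Rightarrow> ('s,'a) sched \<Rightarrow> 's \<Rightarrow> 's set \<Rightarrow> real" where
  "Rn n \<sigma> x T = E n \<sigma> x (\<lambda>h. if visits x h T then 1 else 0)"

lemma reach_prob_eq: "reach_prob X Act P \<sigma> x T = lim (\<lambda>n. Rn n \<sigma> x T)"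
  unfolding reach_prob_def Rn_def E_def
  by (simp add: sum.inter_filter[OF finite_paths_len[OF finX finA]] if_distrib cong: if_cong)

lemma Rn_0: "Rn 0 \<sigma> x T = (if x \<in> T then 1 else 0)"
  by (simp add: Rn_def E_0 visits_Nil)

lemma Rn_Suc:
  assumes "\<sigma> \<in> Sch" "x \<in> X"
  shows "Rn (Suc n) \<sigma> x T = (if x \<in> T then 1 else (\<Sum>\<alpha>\<in>Act. \<Sum>y\<in>X. \<sigma> x [] \<alpha> * P x \<alpha> y * Rn n (sh \<sigma> x \<alpha> y) y T))"
proof (cases "x \<in> T")
  case True
  have "Rn (Suc n) \<sigma> x T = (\<Sum>\<alpha>\<in>Act. \<Sum>y\<in>X. \<sigma> x [] \<alpha> * P x \<alpha> y * 1)"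
    unfolding Rn_def E_Suc using True E_one[OF sh_sched[OF assms]] by (auto simp: visits_Cons intro!: sum.cong)
  then show ?thesis using True sumP_const[OF assms, of 1] by simp
next
  case False
  then show ?thesis unfolding Rn_def E_Suc by (simp add: visits_Cons)
qed

lemma Rn_bounds: "\<sigma> \<in> Sch \<Longrightarrow> x \<in> X \<Longrightarrow> 0 \<le> Rn n \<sigma> x T \<and> Rn n \<sigma> x T \<le> 1"
  unfolding Rn_def using E_nonneg[of \<sigma> x] E_mono[of \<sigma> x _ "\<lambda>_. 1"] E_one[of \<sigma> x] by auto

lemma Rn_incr: "\<sigma> \<in> Sch \<Longrightarrow> x \<in> X \<Longrightarrow> Rn n \<sigma> x T \<le> Rn (Suc n) \<sigma> x T"
proof (induction n arbitrary: \<sigma> x)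
  case 0
  show ?case
  proof (cases "x \<in> T")
    case True
    then show ?thesis using Rn_Suc[OF 0] by (simp add: Rn_0)
  next
    case False
    have "0 \<le> (\<Sum>\<alpha>\<in>Act. \<Sum>y\<in>X. \<sigma> x [] \<alpha> * P x \<alpha> y * Rn 0 (sh \<sigma> x \<alpha> y) y T)"
      by (intro sum_nonneg mult_nonneg_nonneg sigmaP_nonneg[OF 0]) (auto simp: Rn_0)
    then show ?thesis using Rn_Suc[OF 0] False by (simp add: Rn_0)
  qed
next
  case (Suc n)
  show ?case
  proof (cases "x \<in> T")
    case True
    then show ?thesis using Rn_Suc[OF Suc.prems] by simp
  next
    case False
    have "(\<Sum>\<alpha>\<in>Act. \<Sum>y\<in>X. \<sigma> x [] \<alpha> * P x \<alpha> y * Rn n (sh \<sigma> x \<alpha> y) y T) \<le>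
          (\<Sum>\<alpha>\<in>Act. \<Sum>y\<in>X. \<sigma> x [] \<alpha> * P x \<alpha> y * Rn (Suc n) (sh \<sigma> x \<alpha> y) y T)"
    proof (intro sum_mono)
      fix \<alpha> y assume a: "\<alpha> \<in> Act" and y: "y \<in> X"
      show "\<sigma> x [] \<alpha> * P x \<alpha> y * Rn n (sh \<sigma> x \<alpha> y) y T \<le> \<sigma> x [] \<alpha> * P x \<alpha> y * Rn (Suc n) (sh \<sigma> x \<alpha> y) y T"
        using Suc.IH[OF sh_sched[OF Suc.prems a y] y] sigmaP_nonneg[OF Suc.prems a, of y] by (rule mult_left_mono)
    qed
    then show ?thesis using Rn_Suc[OF Suc.prems, of n T] Rn_Suc[OF Suc.prems, of "Suc n" T] False by simp
  qed
qed

lemma Rn_lim: "\<sigma> \<in> Sch \<Longrightarrow> x \<in> X \<Longrightarrow> (\<lambda>n. Rn n \<sigma> x T) \<longlonglongrightarrow> reach_prob X Act P \<sigma> x T"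
proof -
  assume a: "\<sigma> \<in> Sch" "x \<in> X"
  have "incseq (\<lambda>n. Rn n \<sigma> x T)" by (rule incseq_SucI) (use Rn_incr[OF a] in auto)
  moreover have "\<forall>n. Rn n \<sigma> x T \<le> 1" using Rn_bounds[OF a] by blast
  ultimately obtain L where "(\<lambda>n. Rn n \<sigma> x T) \<longlonglongrightarrow> L" using incseq_convergent by blast
  then show ?thesis unfolding reach_prob_eq using limI by metis
qed

lemma Rn_cong: "(\<And>h. \<sigma>1 x h = \<sigma>2 x h) \<Longrightarrow> Rn n \<sigma>1 x T = Rn n \<sigma>2 x T"
  unfolding Rn_def by (rule E_cong_sched)

lemma reach_cong: "(\<And>h. \<sigma>1 x h = \<sigma>2 x h) \<Longrightarrow> reach_prob X Act P \<sigma>1 x T = reach_prob X Act P \<sigma>2 x T"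
  unfolding reach_prob_eq using Rn_cong by metis

lemma reach_mix:
  assumes "0 \<le> l" "l \<le> 1" "\<sigma>1 \<in> Sch" "\<sigma>2 \<in> Sch" "x \<in> X"
  shows "reach_prob X Act P (mix l P \<sigma>1 \<sigma>2) x T = l * reach_prob X Act P \<sigma>1 x T + (1 - l) * reach_prob X Act P \<sigma>2 x T"
proof -
  have "Rn n (mix l P \<sigma>1 \<sigma>2) x T = l * Rn n \<sigma>1 x T + (1 - l) * Rn n \<sigma>2 x T" for n
  proof -
    let ?f = "\<lambda>h. if visits x h T then 1 else (0::real)"
    have "Rn n (mix l P \<sigma>1 \<sigma>2) x T = (\<Sum>h\<in>paths_len X Act n. l * (path_prob P \<sigma>1 x h * ?f h) + (1 - l) * (path_prob P \<sigma>2 x h * ?f h))"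
      unfolding Rn_def E_def
    proof (rule sum.cong[OF refl])
      fix h assume "h \<in> paths_len X Act n"
      then have "set h \<subseteq> Act \<times> X" by (simp add: paths_len_def)
      then show "path_prob P (mix l P \<sigma>1 \<sigma>2) x h * ?f h = l * (path_prob P \<sigma>1 x h * ?f h) + (1 - l) * (path_prob P \<sigma>2 x h * ?f h)"
        unfolding path_prob_def using mix_pp[OF assms] by (simp add: algebra_simps)
    qed
    also have "\<dots> = l * Rn n \<sigma>1 x T + (1 - l) * Rn n \<sigma>2 x T"
      unfolding Rn_def E_def by (simp add: sum.distrib sum_distrib_left)
    finally show ?thesis .
  qed
  then have "(\<lambda>n. Rn n (mix l P \<sigma>1 \<sigma>2) x T) \<longlonglongrightarrow> l * reach_prob X Act P \<sigma>1 x T + (1 - l) * reach_prob X Act P \<sigma>2 x T"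
    using Rn_lim[OF assms(3,5)] Rn_lim[OF assms(4,5)] by (simp add: tendsto_intros)
  moreover have "(\<lambda>n. Rn n (mix l P \<sigma>1 \<sigma>2) x T) \<longlonglongrightarrow> reach_prob X Act P (mix l P \<sigma>1 \<sigma>2) x T"
    by (rule Rn_lim[OF mix_sched[OF assms(1-4)] assms(5)])
  ultimately show ?thesis using LIMSEQ_unique by blast
qed

end


fun lift :: "'s set set \<Rightarrow> 's set set \<Rightarrow> 's \<Rightarrow> ('a \<times> 's) list \<Rightarrow> ('a \<times> ('s \<times> 's set set)) list" where
  "lift TT U s [] = []"
| "lift TT U s ((\<alpha>,t)#h) = (\<alpha>,(t, U \<union> {V\<in>TT. s \<in> V})) # lift TT (U \<union> {V\<in>TT. s \<in> V}) t h"

definition prj :: "('a \<times> ('s \<times> 's set set)) list \<Rightarrow> ('a \<times> 's) list" where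
  "prj h = map (\<lambda>(\<alpha>,y). (\<alpha>, fst y)) h"

lemma prj_lift: "prj (lift TT U s h) = h"
  by (induction TT U s h rule: lift.induct) (auto simp: prj_def)

lemma prj_Cons[simp]: "prj ((\<alpha>,y)#h) = (\<alpha>, fst y) # prj h"
  by (simp add: prj_def)

lemma lift_set: "U \<subseteq> TT \<Longrightarrow> set h \<subseteq> Act \<times> S \<Longrightarrow> set (lift TT U s h) \<subseteq> Act \<times> (S \<times> Pow TT)"
  by (induction TT U s h rule: lift.induct) auto

lemma lift_last: "fst (last_state (s,U) (lift TT U s h)) = last_state s h"
  by (induction TT U s h rule: lift.induct) auto

lemma last_prj: "fst (last_state x h) = last_state (fst x) (prj h)"
proof (induction h arbitrary: x)
  case Nil
  then show ?case by (simp add: prj_def)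
next
  case (Cons a h)
  obtain \<alpha> y where a: "a = (\<alpha>,y)" by (cases a)
  show ?case using Cons[of y] by (simp add: a)
qed

definition rc :: "'s set set \<Rightarrow> ('s set \<Rightarrow> real) \<Rightarrow> ('s \<times> 's set set) \<Rightarrow> real" where
  "rc TT w x = (\<Sum>V\<in>TT. w V * rewT V x)"

locale unf = mdp S Act P for S :: "'s set" and Act :: "'a set" and P +
  fixes TT :: "'s set set"
  assumes finTT: "finite TT"
begin

abbreviation "Sc \<equiv> S \<times> Pow TT"
abbreviation "Pc \<equiv> unf_P P TT"

lemma sumPc:
  assumes "U \<subseteq> TT"
  shows "(\<Sum>y\<in>Sc. Pc (s,U) \<alpha> y * g y) = (\<Sum>t\<in>S. P s \<alpha> t * g (t, U \<union> {V\<in>TT. s \<in> V}))"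
proof -
  have U': "U \<union> {V\<in>TT. s \<in> V} \<in> Pow TT" using assms by auto
  have "(\<Sum>y\<in>Sc. Pc (s,U) \<alpha> y * g y) = (\<Sum>t\<in>S. \<Sum>W\<in>Pow TT. Pc (s,U) \<alpha> (t,W) * g (t,W))"
    by (rule sum_prod_split)
  also have "\<dots> = (\<Sum>t\<in>S. \<Sum>W\<in>Pow TT. if W = U \<union> {V\<in>TT. s \<in> V} then P s \<alpha> t * g (t, U \<union> {V\<in>TT. s \<in> V}) else 0)"
    by (intro sum.cong refl) (auto simp: unf_P_def)
  also have "\<dots> = (\<Sum>t\<in>S. P s \<alpha> t * g (t, U \<union> {V\<in>TT. s \<in> V}))"
    using U' finTT by simp
  finally show ?thesis .
qed

lemma sumPc1:
  assumes "U \<subseteq> TT"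
  shows "(\<Sum>y\<in>Sc. Pc (s,U) \<alpha> y) = (\<Sum>t\<in>S. P s \<alpha> t)"
  using sumPc[OF assms, of s \<alpha> "\<lambda>_. 1"] by simp

lemma mdpc: "is_mdp Sc Act Pc"
proof -
  have "finite Sc" using finX finTT by simp
  moreover have "Sc \<noteq> {}"
  proof -
    obtain s0 where "s0 \<in> S" using neX by blast
    then have "(s0, {}) \<in> Sc" by simp
    then show ?thesis by blast
  qed
  moreover have "\<forall>x\<in>Sc. \<forall>\<alpha>\<in>Act. \<forall>y. Pc x \<alpha> y \<ge> 0 \<and> (y \<notin> Sc \<longrightarrow> Pc x \<alpha> y = 0)"
  proof (intro ballI allI conjI impI)
    fix x \<alpha> y assume x: "x \<in> Sc" and a: "\<alpha> \<in> Act"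
    show "Pc x \<alpha> y \<ge> 0" using P_nonneg[of "fst x" \<alpha>] x a by (auto simp: unf_P_def)
    assume y: "y \<notin> Sc"
    show "Pc x \<alpha> y = 0"
    proof (cases "snd y = snd x \<union> {T\<in>TT. fst x \<in> T}")
      case True
      then have "snd y \<subseteq> TT" using x by auto
      then have "fst y \<notin> S" using y by (cases y) auto
      then show ?thesis using True P_out[of "fst x" \<alpha> "fst y"] x a by (auto simp: unf_P_def)
    next
      case False
      then show ?thesis by (simp add: unf_P_def)
    qed
  qed
  moreover have "\<forall>x\<in>Sc. \<forall>\<alpha>\<in>Act. (\<Sum>y\<in>Sc. Pc x \<alpha> y) = 1 \<or> (\<Sum>y\<in>Sc. Pc x \<alpha> y) = 0"
    using sumPc1 mdp unfolding is_mdp_def by auto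
  moreover have "\<forall>x\<in>Sc. \<exists>\<alpha>\<in>Act. (\<Sum>y\<in>Sc. Pc x \<alpha> y) = 1"
    using sumPc1 mdp unfolding is_mdp_def by auto
  moreover have "finite Act" "Act \<noteq> {}" using mdp unfolding is_mdp_def by auto
  ultimately show ?thesis unfolding is_mdp_def by blast
qed

lemma en_c: "x \<in> Sc \<Longrightarrow> enabled Sc Act Pc x = en (fst x)"
  unfolding enabled_def using sumPc1[of "snd x" "fst x"] by (cases x) auto

lemma lmdp_c: "lmdp Sc Act Pc (\<lambda>x. card (snd x))"
proof (unfold_locales)
  show "is_mdp Sc Act Pc" by (rule mdpc)
  fix x \<alpha> y assume x: "x \<in> Sc" and "\<alpha> \<in> Act" and p: "0 < Pc x \<alpha> y"
  then have "snd y = snd x \<union> {T\<in>TT. fst x \<in> T}" by (auto simp: unf_P_def split: if_splits)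
  moreover have "finite (snd x \<union> {T\<in>TT. fst x \<in> T})" using x finTT finite_subset by auto
  ultimately show "card (snd x) \<le> card (snd y)" by (simp add: card_mono)
qed

sublocale C: lmdp Sc Act Pc "\<lambda>x. card (snd x)" by (rule lmdp_c)

lemma good_rc: "C.good (rc TT w)"
  unfolding C.good_def
proof (intro ballI impI allI)
  fix x \<alpha> y assume x: "x \<in> Sc" and r: "rc TT w x \<noteq> 0" and a: "\<alpha> \<in> Act" and p: "0 < Pc x \<alpha> y"
  obtain V where V: "V \<in> TT" "w V * rewT V x \<noteq> 0" using r unfolding rc_def by (meson sum.neutral)
  have V2: "fst x \<in> V" "V \<notin> snd x" using V(2) by (auto simp: rewT_def split: if_splits)
  have sy: "snd y = snd x \<union> {T\<in>TT. fst x \<in> T}" using p by (auto simp: unf_P_def split: if_splits)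
  have fin: "finite (snd y)" using sy x finTT finite_subset by auto
  have "snd x \<subset> snd y" using sy V V2 by auto
  then show "card (snd x) < card (snd y)" using fin psubset_card_mono by blast
qed

definition rel :: "('s \<times> 's set set, 'a) sched \<Rightarrow> ('s,'a) sched \<Rightarrow> 's \<Rightarrow> 's set set \<Rightarrow> bool" where
  "rel \<sigma>' \<sigma> s U \<longleftrightarrow> (\<forall>h. set h \<subseteq> Act \<times> S \<longrightarrow> \<sigma>' (s,U) (lift TT U s h) = \<sigma> s h)"

lemma rel_sh:
  assumes "rel \<sigma>' \<sigma> s U" "\<alpha> \<in> Act" "t \<in> S"
  shows "rel (sh \<sigma>' (s,U) \<alpha> (t, U \<union> {V\<in>TT. s \<in> V})) (sh \<sigma> s \<alpha> t) t (U \<union> {V\<in>TT. s \<in> V})"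
  unfolding rel_def
proof (intro allI impI)
  fix h :: "('a \<times> 's) list" assume h: "set h \<subseteq> Act \<times> S"
  have "set ((\<alpha>,t)#h) \<subseteq> Act \<times> S" using h assms by auto
  then have "\<sigma>' (s,U) (lift TT U s ((\<alpha>,t)#h)) = \<sigma> s ((\<alpha>,t)#h)" using assms(1) unfolding rel_def by blast
  then show "sh \<sigma>' (s, U) \<alpha> (t, U \<union> {V \<in> TT. s \<in> V}) (t, U \<union> {V \<in> TT. s \<in> V}) (lift TT (U \<union> {V \<in> TT. s \<in> V}) t h) =
         sh \<sigma> s \<alpha> t t h" by (simp add: sh_def)
qed

lemma corr:
  assumes "\<sigma>' \<in> C.Sch" "\<sigma> \<in> Sch" "s \<in> S" "U \<subseteq> TT" "rel \<sigma>' \<sigma> s U"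
  shows "C.Jn (rc TT w) n \<sigma>' (s,U) = (\<Sum>V\<in>TT. w V * (if V \<in> U then 0 else Rn n \<sigma> s V))"
  using assms
proof (induction n arbitrary: \<sigma>' \<sigma> s U)
  case 0
  show ?case unfolding C.Jn_0 rc_def Rn_0
    by (intro sum.cong refl) (auto simp: rewT_def)
next
  case (Suc n)
  define U' where "U' = U \<union> {V\<in>TT. s \<in> V}"
  have U': "U' \<subseteq> TT" using Suc.prems(4) unfolding U'_def by auto
  have sU: "(s,U) \<in> Sc" using Suc.prems by auto
  have s0: "\<sigma>' (s,U) [] = \<sigma> s []" using Suc.prems(5) unfolding rel_def by (metis empty_subsetI lift.simps(1) list.set(1))
  have IH: "C.Jn (rc TT w) n (sh \<sigma>' (s,U) \<alpha> (t,U')) (t,U') = (\<Sum>V\<in>TT. w V * (if V \<in> U' then 0 else Rn n (sh \<sigma> s \<alpha> t) t V))"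
    if a: "\<alpha> \<in> Act" and t: "t \<in> S" for \<alpha> t
  proof (rule Suc.IH)
    show "sh \<sigma>' (s, U) \<alpha> (t, U') \<in> C.Sch" using C.sh_sched[OF Suc.prems(1) sU a] t U' by auto
    show "sh \<sigma> s \<alpha> t \<in> Sch" using sh_sched[OF Suc.prems(2,3) a t] .
    show "t \<in> S" "U' \<subseteq> TT" using t U' by auto
    show "rel (sh \<sigma>' (s, U) \<alpha> (t, U')) (sh \<sigma> s \<alpha> t) t U'" unfolding U'_def using rel_sh[OF Suc.prems(5) a t] .
  qed
  have "C.Jn (rc TT w) (Suc n) \<sigma>' (s,U) = rc TT w (s,U) + (\<Sum>\<alpha>\<in>Act. \<Sum>y\<in>Sc. \<sigma>' (s,U) [] \<alpha> * Pc (s,U) \<alpha> y * C.Jn (rc TT w) n (sh \<sigma>' (s,U) \<alpha> y) y)"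
    by (rule C.Jn_Suc[OF Suc.prems(1) sU])
  also have "\<dots> = rc TT w (s,U) + (\<Sum>\<alpha>\<in>Act. \<Sum>t\<in>S. \<sigma> s [] \<alpha> * P s \<alpha> t * C.Jn (rc TT w) n (sh \<sigma>' (s,U) \<alpha> (t,U')) (t,U'))"
  proof -
    have "(\<Sum>y\<in>Sc. \<sigma>' (s,U) [] \<alpha> * Pc (s,U) \<alpha> y * C.Jn (rc TT w) n (sh \<sigma>' (s,U) \<alpha> y) y) =
          (\<Sum>t\<in>S. \<sigma> s [] \<alpha> * P s \<alpha> t * C.Jn (rc TT w) n (sh \<sigma>' (s,U) \<alpha> (t,U')) (t,U'))" for \<alpha>
      using sumPc[OF Suc.prems(4), of s \<alpha> "\<lambda>y. \<sigma>' (s,U) [] \<alpha> * C.Jn (rc TT w) n (sh \<sigma>' (s,U) \<alpha> y) y"]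
      unfolding s0 U'_def by (simp add: ac_simps)
    then show ?thesis by simp
  qed
  also have "\<dots> = rc TT w (s,U) + (\<Sum>\<alpha>\<in>Act. \<Sum>t\<in>S. \<sigma> s [] \<alpha> * P s \<alpha> t * (\<Sum>V\<in>TT. w V * (if V \<in> U' then 0 else Rn n (sh \<sigma> s \<alpha> t) t V)))"
    using IH by simp
  also have "\<dots> = (\<Sum>V\<in>TT. w V * (rewT V (s,U) + (\<Sum>\<alpha>\<in>Act. \<Sum>t\<in>S. \<sigma> s [] \<alpha> * P s \<alpha> t * (if V \<in> U' then 0 else Rn n (sh \<sigma> s \<alpha> t) t V))))"
    unfolding rc_def
    by (simp add: distrib_left sum.distrib sum_distrib_left mult.commute mult.left_commute sum.swap[of _ TT])
  also have "\<dots> = (\<Sum>V\<in>TT. w V * (if V \<in> U then 0 else Rn (Suc n) \<sigma> s V))"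
  proof (intro sum.cong refl)
    fix V assume V: "V \<in> TT"
    have "rewT V (s,U) + (\<Sum>\<alpha>\<in>Act. \<Sum>t\<in>S. \<sigma> s [] \<alpha> * P s \<alpha> t * (if V \<in> U' then 0 else Rn n (sh \<sigma> s \<alpha> t) t V))
        = (if V \<in> U then 0 else Rn (Suc n) \<sigma> s V)"
    proof (cases "V \<in> U")
      case True
      then show ?thesis unfolding U'_def by (simp add: rewT_def)
    next
      case False
      show ?thesis
      proof (cases "s \<in> V")
        case True
        then show ?thesis using False V Rn_Suc[OF Suc.prems(2,3)] unfolding U'_def by (simp add: rewT_def)
      next
        case sV: False
        then have "V \<notin> U'" using False unfolding U'_def by auto
        then show ?thesis using False sV Rn_Suc[OF Suc.prems(2,3)] by (simp add: rewT_def)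
      qed
    qed
    then show "w V * (rewT V (s,U) + (\<Sum>\<alpha>\<in>Act. \<Sum>t\<in>S. \<sigma> s [] \<alpha> * P s \<alpha> t * (if V \<in> U' then 0 else Rn n (sh \<sigma> s \<alpha> t) t V)))
        = w V * (if V \<in> U then 0 else Rn (Suc n) \<sigma> s V)" by simp
  qed
  finally show ?case .
qed

end


context unf
begin

lemma opt_rc: "opt Sc Act Pc (\<lambda>x. card (snd x)) (rc TT w)"
  using lmdp_c good_rc by (simp add: opt_def opt_axioms_def)

definition Fw :: "('s set \<Rightarrow> real) \<Rightarrow> ('s,'a) sched \<Rightarrow> 's \<Rightarrow> real" where
  "Fw w \<sigma> s = (\<Sum>V\<in>TT. w V * reach_prob S Act P \<sigma> s V)"

lemma Jc_eq:
  assumes "\<sigma>' \<in> C.Sch" "\<sigma> \<in> Sch" "s \<in> S" "rel \<sigma>' \<sigma> s {}"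
  shows "C.J (rc TT w) \<sigma>' (s,{}) = Fw w \<sigma> s"
proof -
  have "(\<lambda>n. C.Jn (rc TT w) n \<sigma>' (s,{})) = (\<lambda>n. \<Sum>V\<in>TT. w V * Rn n \<sigma> s V)"
    using corr[OF assms(1-3) _ assms(4), of w] by simp
  moreover have "(\<lambda>n. \<Sum>V\<in>TT. w V * Rn n \<sigma> s V) \<longlonglongrightarrow> Fw w \<sigma> s"
    unfolding Fw_def by (intro tendsto_intros Rn_lim assms)
  ultimately show ?thesis unfolding C.J_def by (simp add: limI)
qed

definition pj :: "('s,'a) sched \<Rightarrow> ('s \<times> 's set set, 'a) sched" where
  "pj \<sigma> = (\<lambda>x h. \<sigma> (fst x) (prj h))"

definition lf :: "('s \<times> 's set set, 'a) sched \<Rightarrow> ('s,'a) sched" where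
  "lf \<sigma>' = (\<lambda>s h. \<sigma>' (s,{}) (lift TT {} s h))"

lemma pj_sched:
  assumes "\<sigma> \<in> Sch"
  shows "pj \<sigma> \<in> C.Sch"
proof -
  { fix x h assume x: "x \<in> Sc" and h: "set h \<subseteq> Act \<times> Sc"
    have fx: "fst x \<in> S" using x by auto
    have ph: "set (prj h) \<subseteq> Act \<times> S" using h by (auto simp: prj_def)
    have "last_state x h \<in> Sc" using C.last_state_in[OF x h] .
    then have en: "enabled Sc Act Pc (last_state x h) = en (last_state (fst x) (prj h))"
      using en_c last_prj by metis
    have "(\<forall>\<beta>. pj \<sigma> x h \<beta> \<ge> 0) \<and>
        (\<forall>\<beta>. \<beta> \<notin> enabled Sc Act Pc (last_state x h) \<longrightarrow> pj \<sigma> x h \<beta> = 0) \<and>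
        (\<Sum>\<beta>\<in>enabled Sc Act Pc (last_state x h). pj \<sigma> x h \<beta>) = 1"
      unfolding en pj_def using sched_nonneg[OF assms fx ph] sched_zero[OF assms fx ph] sched_sum_en[OF assms fx ph]
      by auto }
  then show ?thesis by (simp add: scheds_def is_sched_def)
qed

lemma pj_rel: "rel (pj \<sigma>) \<sigma> s U"
  unfolding rel_def pj_def by (simp add: prj_lift)

lemma lf_sched:
  assumes "\<sigma>' \<in> C.Sch"
  shows "lf \<sigma>' \<in> Sch"
proof -
  { fix s h assume s: "s \<in> S" and h: "set h \<subseteq> Act \<times> S"
    have sc: "(s,{}) \<in> Sc" using s by simp
    have lh: "set (lift TT {} s h) \<subseteq> Act \<times> Sc" using lift_set[of "{}" TT h Act S s] h by simp
    have "last_state (s,{}) (lift TT {} s h) \<in> Sc" using C.last_state_in[OF sc lh] .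
    then have en: "enabled Sc Act Pc (last_state (s,{}) (lift TT {} s h)) = en (last_state s h)"
      using en_c lift_last by metis
    have "(\<forall>\<beta>. lf \<sigma>' s h \<beta> \<ge> 0) \<and>
        (\<forall>\<beta>. \<beta> \<notin> en (last_state s h) \<longrightarrow> lf \<sigma>' s h \<beta> = 0) \<and>
        (\<Sum>\<beta>\<in>en (last_state s h). lf \<sigma>' s h \<beta>) = 1"
      unfolding en[symmetric] lf_def using C.sched_nonneg[OF assms sc lh] C.sched_zero[OF assms sc lh] C.sched_sum_en[OF assms sc lh]
      by auto }
  then show ?thesis by (simp add: scheds_def is_sched_def)
qed

lemma lf_rel: "rel \<sigma>' (lf \<sigma>') s {}"
  unfolding rel_def lf_def by simp

lemma val_sets:
  assumes "s \<in> S"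
  shows "(\<lambda>\<sigma>'. C.J (rc TT w) \<sigma>' (s,{})) ` C.Sch = (\<lambda>\<sigma>. Fw w \<sigma> s) ` Sch"
proof
  show "(\<lambda>\<sigma>'. C.J (rc TT w) \<sigma>' (s,{})) ` C.Sch \<subseteq> (\<lambda>\<sigma>. Fw w \<sigma> s) ` Sch"
  proof
    fix v assume "v \<in> (\<lambda>\<sigma>'. C.J (rc TT w) \<sigma>' (s,{})) ` C.Sch"
    then obtain \<sigma>' where s': "\<sigma>' \<in> C.Sch" "v = C.J (rc TT w) \<sigma>' (s,{})" by blast
    have "v = Fw w (lf \<sigma>') s" using Jc_eq[OF s'(1) lf_sched[OF s'(1)] assms lf_rel] s'(2) by simp
    then show "v \<in> (\<lambda>\<sigma>. Fw w \<sigma> s) ` Sch" using lf_sched[OF s'(1)] by blast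
  qed
  show "(\<lambda>\<sigma>. Fw w \<sigma> s) ` Sch \<subseteq> (\<lambda>\<sigma>'. C.J (rc TT w) \<sigma>' (s,{})) ` C.Sch"
  proof
    fix v assume "v \<in> (\<lambda>\<sigma>. Fw w \<sigma> s) ` Sch"
    then obtain \<sigma> where s1: "\<sigma> \<in> Sch" "v = Fw w \<sigma> s" by blast
    have "v = C.J (rc TT w) (pj \<sigma>) (s,{})" using Jc_eq[OF pj_sched[OF s1(1)] s1(1) assms pj_rel] s1(2) by simp
    then show "v \<in> (\<lambda>\<sigma>'. C.J (rc TT w) \<sigma>' (s,{})) ` C.Sch" using pj_sched[OF s1(1)] by blast
  qed
qed

lemma max_attained:
  assumes "s \<in> S"
  shows "\<exists>\<sigma>\<in>Sch. \<forall>\<sigma>''\<in>Sch. Fw w \<sigma>'' s \<le> Fw w \<sigma> s"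
proof -
  have sc: "(s,{}) \<in> Sc" using assms by simp
  obtain \<sigma>' where s': "\<sigma>' \<in> C.Sch" "\<forall>\<sigma>''\<in>C.Sch. C.J (rc TT w) \<sigma>'' (s,{}) \<le> C.J (rc TT w) \<sigma>' (s,{})"
    using opt.attain[OF opt_rc sc] by blast
  have "\<forall>\<sigma>''\<in>Sch. Fw w \<sigma>'' s \<le> Fw w (lf \<sigma>') s"
  proof
    fix \<sigma>'' assume s'': "\<sigma>'' \<in> Sch"
    have "Fw w \<sigma>'' s = C.J (rc TT w) (pj \<sigma>'') (s,{})" using Jc_eq[OF pj_sched[OF s''] s'' assms pj_rel] by simp
    also have "\<dots> \<le> C.J (rc TT w) \<sigma>' (s,{})" using s'(2) pj_sched[OF s''] by blast
    also have "\<dots> = Fw w (lf \<sigma>') s" using Jc_eq[OF s'(1) lf_sched[OF s'(1)] assms lf_rel] .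
    finally show "Fw w \<sigma>'' s \<le> Fw w (lf \<sigma>') s" .
  qed
  then show ?thesis using lf_sched[OF s'(1)] by blast
qed

lemma Fw_neg: "Fw (\<lambda>V. - w V) \<sigma> s = - Fw w \<sigma> s"
  by (simp add: Fw_def sum_negf)

lemma min_attained:
  assumes "s \<in> S"
  shows "\<exists>\<sigma>\<in>Sch. \<forall>\<sigma>''\<in>Sch. Fw w \<sigma> s \<le> Fw w \<sigma>'' s"
  using max_attained[OF assms, of "\<lambda>V. - w V"] by (auto simp: Fw_neg)

end


context mdp
begin

definition Gc :: "nat \<Rightarrow> (nat \<Rightarrow> real) \<Rightarrow> (nat \<Rightarrow> 's) \<Rightarrow> (nat \<Rightarrow> 's set) \<Rightarrow> (nat \<Rightarrow> nat) \<Rightarrow> 's \<times> nat \<Rightarrow> ('s,'a) sched \<Rightarrow> real" where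
  "Gc m q s T k c \<sigma> = (\<Sum>i\<in>ind m s k c. q i * reach_prob X Act P \<sigma> (fst c) (T i))"

lemma Gc_mix:
  assumes "0 \<le> l" "l \<le> 1" "\<sigma>1 \<in> Sch" "\<sigma>2 \<in> Sch" "fst c \<in> X"
  shows "Gc m q s T k c (mix l P \<sigma>1 \<sigma>2) = l * Gc m q s T k c \<sigma>1 + (1 - l) * Gc m q s T k c \<sigma>2"
proof -
  have e: "\<And>i. q i * (l * reach_prob X Act P \<sigma>1 (fst c) (T i) + (1 - l) * reach_prob X Act P \<sigma>2 (fst c) (T i))
     = l * (q i * reach_prob X Act P \<sigma>1 (fst c) (T i)) + (1 - l) * (q i * reach_prob X Act P \<sigma>2 (fst c) (T i))"
    by (simp add: algebra_simps)
  show ?thesis unfolding Gc_def reach_mix[OF assms] e by (simp only: sum.distrib sum_distrib_left[symmetric])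
qed

lemma Gc_cong: "(\<And>h. \<sigma>1 (fst c) h = \<sigma>2 (fst c) h) \<Longrightarrow> Gc m q s T k c \<sigma>1 = Gc m q s T k c \<sigma>2"
  unfolding Gc_def using reach_cong by metis

lemma per_c:
  assumes c: "c \<in> Comb m s k" and sS: "\<forall>i\<in>{1..m}. s i \<in> X"
  shows "(\<forall>\<sigma>\<in>Sch. vmin_c X Act P m q s T k c \<le> Gc m q s T k c \<sigma> \<and> Gc m q s T k c \<sigma> \<le> vmax_c X Act P m q s T k c)
       \<and> (\<exists>\<sigma>\<in>Sch. Gc m q s T k c \<sigma> = vmax_c X Act P m q s T k c)
       \<and> (\<exists>\<sigma>\<in>Sch. Gc m q s T k c \<sigma> = vmin_c X Act P m q s T k c)"
proof -
  define TT where "TT = Tc m s T k c"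
  define w where "w = qT m q s T k c"
  have finI: "finite (ind m s k c)" unfolding ind_def by simp
  interpret U: unf X Act P TT by unfold_locales (simp add: TT_def Tc_def finI)
  obtain i where i: "i \<in> {1..m}" "c = (s i, k i)" using c unfolding Comb_def by blast
  have fc: "fst c \<in> X" using i sS by auto
  have G: "Gc m q s T k c \<sigma> = U.Fw w \<sigma> (fst c)" for \<sigma>
  proof -
    have "Gc m q s T k c \<sigma> = (\<Sum>V\<in>T ` ind m s k c. \<Sum>i\<in>{i\<in>ind m s k c. T i = V}. q i * reach_prob X Act P \<sigma> (fst c) (T i))"
      unfolding Gc_def by (rule sum.image_gen[OF finI])
    also have "\<dots> = (\<Sum>V\<in>T ` ind m s k c. (\<Sum>i\<in>{i\<in>ind m s k c. T i = V}. q i) * reach_prob X Act P \<sigma> (fst c) V)"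
      by (intro sum.cong refl) (auto simp: sum_distrib_right)
    finally show ?thesis unfolding U.Fw_def unfolding w_def TT_def Tc_def qT_def .
  qed
  have rw: "rew_c m q s T k c = rc TT w" by (simp add: fun_eq_iff rew_c_def rc_def TT_def w_def)
  have vmax: "vmax_c X Act P m q s T k c = Sup ((\<lambda>\<sigma>. Gc m q s T k c \<sigma>) ` Sch)"
    unfolding vmax_c_def Let_def unf_states_def TT_def[symmetric] rw U.C.J_eq[symmetric] G
    using U.val_sets[OF fc, of w] by simp
  have vmin: "vmin_c X Act P m q s T k c = Inf ((\<lambda>\<sigma>. Gc m q s T k c \<sigma>) ` Sch)"
    unfolding vmin_c_def Let_def unf_states_def TT_def[symmetric] rw U.C.J_eq[symmetric] G
    using U.val_sets[OF fc, of w] by simp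
  obtain \<sigma>M where M: "\<sigma>M \<in> Sch" "\<forall>\<sigma>''\<in>Sch. Gc m q s T k c \<sigma>'' \<le> Gc m q s T k c \<sigma>M"
    using U.max_attained[OF fc, of w] unfolding G[symmetric] by blast
  obtain \<sigma>m where m: "\<sigma>m \<in> Sch" "\<forall>\<sigma>''\<in>Sch. Gc m q s T k c \<sigma>m \<le> Gc m q s T k c \<sigma>''"
    using U.min_attained[OF fc, of w] unfolding G[symmetric] by blast
  have eM: "vmax_c X Act P m q s T k c = Gc m q s T k c \<sigma>M"
    unfolding vmax using M by (intro cSup_eq_maximum) auto
  have em: "vmin_c X Act P m q s T k c = Gc m q s T k c \<sigma>m"
    unfolding vmin using m by (intro cInf_eq_minimum) auto
  show ?thesis using eM em M m by auto
qed

lemma per_c_interval: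
  assumes c: "c \<in> Comb m s k" and sS: "\<forall>i\<in>{1..m}. s i \<in> X"
    and v: "vmin_c X Act P m q s T k c \<le> v" "v \<le> vmax_c X Act P m q s T k c"
  shows "\<exists>\<sigma>\<in>Sch. Gc m q s T k c \<sigma> = v"
proof -
  obtain \<sigma>M \<sigma>m where M: "\<sigma>M \<in> Sch" "Gc m q s T k c \<sigma>M = vmax_c X Act P m q s T k c"
    and m: "\<sigma>m \<in> Sch" "Gc m q s T k c \<sigma>m = vmin_c X Act P m q s T k c"
    using per_c[OF c sS] by blast
  obtain i where i: "i \<in> {1..m}" "c = (s i, k i)" using c unfolding Comb_def by blast
  have fc: "fst c \<in> X" using i sS by auto
  define a where "a = vmin_c X Act P m q s T k c"
  define b where "b = vmax_c X Act P m q s T k c"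
  show ?thesis
  proof (cases "a = b")
    case True
    then have "v = a" using v unfolding a_def b_def by simp
    then show ?thesis using m unfolding a_def by blast
  next
    case False
    then have ab: "a < b" using v unfolding a_def b_def by simp
    define l where "l = (v - a) / (b - a)"
    have l0: "0 \<le> l" using v ab unfolding l_def a_def by simp
    have l1: "l \<le> 1" using v ab unfolding l_def b_def by simp
    have e1: "Gc m q s T k c (mix l P \<sigma>M \<sigma>m) = l * b + (1 - l) * a"
      using Gc_mix[OF l0 l1 M(1) m(1) fc] M(2) m(2) unfolding a_def b_def by simp
    have e2: "l * b + (1 - l) * a = a + l * (b - a)" by (simp add: algebra_simps)
    have e3: "l * (b - a) = v - a" using ab unfolding l_def by simp
    have "Gc m q s T k c (mix l P \<sigma>M \<sigma>m) = v" using e1 e2 e3 by simp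
    then show ?thesis using mix_sched[OF l0 l1 M(1) m(1)] by blast
  qed
qed

end


theorem lemma4:
  fixes S :: "'s set" and Act :: "'a set" and P :: "'s \<Rightarrow> 'a \<Rightarrow> 's \<Rightarrow> real"
    and m n :: nat and q :: "nat \<Rightarrow> real" and s :: "nat \<Rightarrow> 's"
    and T :: "nat \<Rightarrow> 's set" and k :: "nat \<Rightarrow> nat" and \<epsilon> :: real
  assumes "is_mdp S Act P"
    and "\<forall>i\<in>{1..m+1}. q i \<in> \<rat>"
    and "\<forall>i\<in>{1..m}. s i \<in> S \<and> T i \<subseteq> S"
    and "k ` {1..m} = {1..n}"
    and "\<epsilon> \<ge> 0"
  shows "(\<exists>\<sigma> :: nat \<Rightarrow> ('s,'a) sched.
            (\<forall>j\<in>{1..n}. \<sigma> j \<in> scheds S Act P) \<and>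
            \<bar>(\<Sum>i=1..m. q i * reach_prob S Act P (\<sigma> (k i)) (s i) (T i)) - q (m+1)\<bar> \<le> \<epsilon>)
         \<longleftrightarrow>
         ((\<Sum>c\<in>Comb m s k. vmin_c S Act P m q s T k c) - \<epsilon> \<le> q (m+1) \<and>
          q (m+1) \<le> (\<Sum>c\<in>Comb m s k. vmax_c S Act P m q s T k c) + \<epsilon>)"
proof -
  interpret M: mdp S Act P by unfold_locales (rule assms(1))
  have sS: "\<forall>i\<in>{1..m}. s i \<in> S" using assms(3) by blast
  define Cb where "Cb = Comb m s k"
  have finC: "finite Cb" unfolding Cb_def Comb_def by simp
  define vmin where "vmin c = vmin_c S Act P m q s T k c" for c
  define vmax where "vmax c = vmax_c S Act P m q s T k c" for c
  define G where "G c \<sigma> = M.Gc m q s T k c \<sigma>" for c \<sigma>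
  have pc: "\<And>c. c \<in> Cb \<Longrightarrow> (\<forall>\<sigma>\<in>M.Sch. vmin c \<le> G c \<sigma> \<and> G c \<sigma> \<le> vmax c)"
    using M.per_c sS unfolding Cb_def vmin_def vmax_def G_def by blast
  have pint: "\<And>c v. c \<in> Cb \<Longrightarrow> vmin c \<le> v \<Longrightarrow> v \<le> vmax c \<Longrightarrow> \<exists>\<sigma>\<in>M.Sch. G c \<sigma> = v"
    using M.per_c_interval sS unfolding Cb_def vmin_def vmax_def G_def by blast
  have snd_n: "\<And>c. c \<in> Cb \<Longrightarrow> snd c \<in> {1..n}" using assms(4) unfolding Cb_def Comb_def by force
  have decomp: "(\<Sum>i=1..m. q i * reach_prob S Act P (\<sigma> (k i)) (s i) (T i)) = (\<Sum>c\<in>Cb. G c (\<sigma> (snd c)))"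
    for \<sigma> :: "nat \<Rightarrow> ('s,'a) sched"
  proof -
    have "(\<Sum>i=1..m. q i * reach_prob S Act P (\<sigma> (k i)) (s i) (T i)) =
          (\<Sum>c\<in>(\<lambda>i. (s i, k i)) ` {1..m}. \<Sum>i\<in>{i\<in>{1..m}. (s i, k i) = c}. q i * reach_prob S Act P (\<sigma> (k i)) (s i) (T i))"
      by (rule sum.image_gen) simp
    also have "\<dots> = (\<Sum>c\<in>Cb. G c (\<sigma> (snd c)))"
      unfolding Cb_def Comb_def G_def M.Gc_def ind_def
      by (intro sum.cong refl) auto
    finally show ?thesis .
  qed
  show ?thesis
  proof
    assume "\<exists>\<sigma> :: nat \<Rightarrow> ('s,'a) sched. (\<forall>j\<in>{1..n}. \<sigma> j \<in> scheds S Act P) \<and>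
            \<bar>(\<Sum>i=1..m. q i * reach_prob S Act P (\<sigma> (k i)) (s i) (T i)) - q (m+1)\<bar> \<le> \<epsilon>"
    then obtain \<sigma> :: "nat \<Rightarrow> ('s,'a) sched" where s1: "\<forall>j\<in>{1..n}. \<sigma> j \<in> scheds S Act P"
      and s2: "\<bar>(\<Sum>c\<in>Cb. G c (\<sigma> (snd c))) - q (m+1)\<bar> \<le> \<epsilon>" unfolding decomp by blast
    have "(\<Sum>c\<in>Cb. vmin c) \<le> (\<Sum>c\<in>Cb. G c (\<sigma> (snd c)))"
      by (rule sum_mono) (use pc s1 snd_n in blast)
    moreover have "(\<Sum>c\<in>Cb. G c (\<sigma> (snd c))) \<le> (\<Sum>c\<in>Cb. vmax c)"
      by (rule sum_mono) (use pc s1 snd_n in blast)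
    ultimately show "(\<Sum>c\<in>Comb m s k. vmin_c S Act P m q s T k c) - \<epsilon> \<le> q (m+1) \<and>
          q (m+1) \<le> (\<Sum>c\<in>Comb m s k. vmax_c S Act P m q s T k c) + \<epsilon>"
      using s2 unfolding Cb_def[symmetric] vmin_def[symmetric] vmax_def[symmetric] by linarith
  next
    assume h: "(\<Sum>c\<in>Comb m s k. vmin_c S Act P m q s T k c) - \<epsilon> \<le> q (m+1) \<and>
          q (m+1) \<le> (\<Sum>c\<in>Comb m s k. vmax_c S Act P m q s T k c) + \<epsilon>"
    define A where "A = (\<Sum>c\<in>Cb. vmin c)"
    define B where "B = (\<Sum>c\<in>Cb. vmax c)"
    have hA: "A - \<epsilon> \<le> q (m+1)" and hB: "q (m+1) \<le> B + \<epsilon>"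
      using h unfolding A_def B_def Cb_def vmin_def vmax_def by auto
    have mM: "\<And>c. c \<in> Cb \<Longrightarrow> vmin c \<le> vmax c" using pc M.dflt_sched by force
    have AB: "A \<le> B" unfolding A_def B_def by (rule sum_mono) (rule mM)
    define t where "t = max A (min B (q (m+1)))"
    have tA: "A \<le> t" and tB: "t \<le> B" and tq: "\<bar>t - q (m+1)\<bar> \<le> \<epsilon>"
      using AB hA hB assms(5) unfolding t_def by auto
    define \<theta> where "\<theta> = (if B = A then 0 else (t - A) / (B - A))"
    have \<theta>0: "0 \<le> \<theta>" and \<theta>1: "\<theta> \<le> 1" using tA tB AB unfolding \<theta>_def by auto
    have t\<theta>: "t = A + \<theta> * (B - A)" using tA tB AB unfolding \<theta>_def by auto
    define vv where "vv c = vmin c + \<theta> * (vmax c - vmin c)" for c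
    have vv1: "\<And>c. c \<in> Cb \<Longrightarrow> vmin c \<le> vv c" unfolding vv_def using mM \<theta>0 by simp
    have vv2: "\<And>c. c \<in> Cb \<Longrightarrow> vv c \<le> vmax c"
    proof -
      fix c assume c: "c \<in> Cb"
      have "\<theta> * (vmax c - vmin c) \<le> 1 * (vmax c - vmin c)"
        using mM[OF c] \<theta>1 by (intro mult_right_mono) auto
      then show "vv c \<le> vmax c" unfolding vv_def by simp
    qed
    have sumvv: "(\<Sum>c\<in>Cb. vv c) = t"
    proof -
      have "(\<Sum>c\<in>Cb. \<theta> * (vmax c - vmin c)) = \<theta> * (\<Sum>c\<in>Cb. vmax c - vmin c)"
        by (rule sum_distrib_left[symmetric])
      also have "\<dots> = \<theta> * (B - A)" unfolding A_def B_def by (simp add: sum_subtractf)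
      finally show ?thesis unfolding vv_def t\<theta> by (simp add: sum.distrib A_def)
    qed
    define sel where "sel c = (SOME \<sigma>. \<sigma> \<in> M.Sch \<and> G c \<sigma> = vv c)" for c
    have sel: "\<And>c. c \<in> Cb \<Longrightarrow> sel c \<in> M.Sch \<and> G c (sel c) = vv c"
    proof -
      fix c assume c: "c \<in> Cb"
      obtain \<sigma> where "\<sigma> \<in> M.Sch \<and> G c \<sigma> = vv c" using pint[OF c vv1[OF c] vv2[OF c]] by blast
      then show "sel c \<in> M.Sch \<and> G c (sel c) = vv c" unfolding sel_def
        by (rule someI[where P="\<lambda>\<sigma>. \<sigma> \<in> M.Sch \<and> G c \<sigma> = vv c"])
    qed
    define \<sigma> where "\<sigma> j = (\<lambda>s0 h. if (s0,j) \<in> Cb then sel (s0,j) s0 h else M.dflt s0 h)" for j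
    have \<sigma>S: "\<sigma> j \<in> M.Sch" for j
    proof -
      { fix s0 h assume s0: "s0 \<in> S" and h: "set h \<subseteq> Act \<times> S"
        have "(\<forall>\<beta>. \<sigma> j s0 h \<beta> \<ge> 0) \<and>
            (\<forall>\<beta>. \<beta> \<notin> M.en (last_state s0 h) \<longrightarrow> \<sigma> j s0 h \<beta> = 0) \<and>
            (\<Sum>\<beta>\<in>M.en (last_state s0 h). \<sigma> j s0 h \<beta>) = 1"
        proof (cases "(s0,j) \<in> Cb")
          case True
          have ss: "sel (s0,j) \<in> M.Sch" using sel[OF True] by blast
          show ?thesis using True M.sched_nonneg[OF ss s0 h] M.sched_zero[OF ss s0 h] M.sched_sum_en[OF ss s0 h]
            unfolding \<sigma>_def by simp
        next
          case False
          show ?thesis using False M.sched_nonneg[OF M.dflt_sched s0 h] M.sched_zero[OF M.dflt_sched s0 h]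
              M.sched_sum_en[OF M.dflt_sched s0 h]
            unfolding \<sigma>_def by simp
        qed }
      then show ?thesis by (simp add: scheds_def is_sched_def)
    qed
    have Gs: "G c (\<sigma> (snd c)) = vv c" if c: "c \<in> Cb" for c
    proof -
      have "G c (\<sigma> (snd c)) = G c (sel c)" unfolding G_def
        by (rule M.Gc_cong) (use c in \<open>simp add: \<sigma>_def\<close>)
      then show ?thesis using sel[OF c] by simp
    qed
    have "(\<Sum>c\<in>Cb. G c (\<sigma> (snd c))) = t" using Gs sumvv by simp
    then have "\<bar>(\<Sum>i=1..m. q i * reach_prob S Act P (\<sigma> (k i)) (s i) (T i)) - q (m+1)\<bar> \<le> \<epsilon>"
      using tq decomp[of \<sigma>] by simp
    then show "\<exists>\<sigma> :: nat \<Rightarrow> ('s,'a) sched. (\<forall>j\<in>{1..n}. \<sigma> j \<in> scheds S Act P) \<and>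
            \<bar>(\<Sum>i=1..m. q i * reach_prob S Act P (\<sigma> (k i)) (s i) (T i)) - q (m+1)\<bar> \<le> \<epsilon>"
      using \<sigma>S by blast
  qed
qed


end
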